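(* Let $\underline{E}=(E_p)_{p\in\mathbb{P}}$ with $E_p\subseteq\overline{\mathbb{Z}_p}$ for every prime $p$, and assume $\underline{E}$ is locally bounded and closed (each $E_p$ is closed in $\overline{\mathbb{Z}_p}$). Let $R=\textnormal{Int}_{\mathbb{Q}}(\underline{E},\overline{\widehat{\mathbb{Z}}})$. If $M\subset R$ is a prime ideal with $M\cap\mathbb{Z}=p\mathbb{Z}$ for some prime $p$, then $M$ is a maximal ideal and there exists $\alpha\in E_p$ such that $M=\mathfrak{M}_{p,\alpha}:=\{f\in R\mid v_p(f(\alpha))>0\}$.
   Context: $\mathbb{P}$ is the set of primes; $\overline{\mathbb{Z}_p}$ is the integral closure of $\mathbb{Z}_p$ in a fixed algebraic closure $\overline{\mathbb{Q}_p}$ of $\mathbb{Q}_p$, with the topology given by $v_p$, the unique extension of the $p$-adic valuation to $\overline{\mathbb{Q}_p}$. For $E_p\subseteq\overline{\mathbb{Z}_p}$, $\textnormal{Int}_{\mathbb{Q}}(E_p,\overline{\mathbb{Z}_p})=\{f\in\mathbb{Q}[X]\mid f(E_p)\subseteq\overline{\mathbb{Z}_p}\}$, and $\textnormal{Int}_{\mathbb{Q}}(\underline{E},\overline{\widehat{\mathbb{Z}}})=\bigcap_p\textnormal{Int}_{\mathbb{Q}}(E_p,\overline{\mathbb{Z}_p})$ (components $E_p$ may be empty). $\underline{E}$ is locally bounded if for each prime $p$ the set $\{[\mathbb{Q}_p(\alpha):\mathbb{Q}_p]\mid\alpha\in E_p\}$ is bounded. *)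

theory Defs
  imports "HOL-Algebra.Ideal" "HOL-Computational_Algebra.Polynomial"
    "HOL-Library.Extended_Real" Complex_Main
begin

(* Model of (\<overline>{Q_p}, v_p): the underlying field is the complex numbers (abstractly
   isomorphic to \<overline>{Q_p} for every p), equipped with a valuation w satisfying the
   axioms below, which characterise (\<overline>{Q_p}, v_p) up to isomorphism. *)

definition is_valuation :: "(complex \<Rightarrow> ereal) \<Rightarrow> bool" where
  "is_valuation w \<longleftrightarrow>
     (\<forall>x. w x = \<infinity> \<longleftrightarrow> x = 0) \<and> (\<forall>x. w x \<noteq> -\<infinity>) \<and>
     (\<forall>x y. w (x * y) = w x + w y) \<and> (\<forall>x y. min (w x) (w y) \<le> w (x + y))"

definition padic_val_rat :: "nat \<Rightarrow> rat \<Rightarrow> int" where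
  "padic_val_rat p q = (case quotient_of q of (a, b) \<Rightarrow>
      int (multiplicity (int p) a) - int (multiplicity (int p) b))"

definition v_converges :: "(complex \<Rightarrow> ereal) \<Rightarrow> (nat \<Rightarrow> complex) \<Rightarrow> complex \<Rightarrow> bool" where
  "v_converges w x l \<longleftrightarrow> (\<forall>N::real. \<exists>n0. \<forall>n\<ge>n0. ereal N < w (x n - l))"

definition v_cauchy :: "(complex \<Rightarrow> ereal) \<Rightarrow> (nat \<Rightarrow> complex) \<Rightarrow> bool" where
  "v_cauchy w x \<longleftrightarrow> (\<forall>N::real. \<exists>n0. \<forall>m\<ge>n0. \<forall>n\<ge>n0. ereal N < w (x m - x n))"

(* closure of Q in the valued field: plays the role of Q_p *)
definition Qp_part :: "(complex \<Rightarrow> ereal) \<Rightarrow> complex set" where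
  "Qp_part w = {l. \<exists>q::nat \<Rightarrow> rat. v_converges w (\<lambda>n. of_rat (q n)) l}"

definition padic_closure_model :: "nat \<Rightarrow> (complex \<Rightarrow> ereal) \<Rightarrow> bool" where
  "padic_closure_model p w \<longleftrightarrow>
     is_valuation w \<and>
     (\<forall>q::rat. q \<noteq> 0 \<longrightarrow> w (of_rat q) = ereal (of_int (padic_val_rat p q))) \<and>
     (\<forall>x. (\<forall>n. x n \<in> Qp_part w) \<and> v_cauchy w x \<longrightarrow> (\<exists>l\<in>Qp_part w. v_converges w x l)) \<and>
     (\<forall>a. \<exists>f::complex poly. f \<noteq> 0 \<and> (\<forall>i. coeff f i \<in> Qp_part w) \<and> poly f a = 0)"

definition Zbar :: "(complex \<Rightarrow> ereal) \<Rightarrow> complex set" where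
  "Zbar w = {x. 0 \<le> w x}"

(* [Q_p(\<alpha>):Q_p] \<le> B for all \<alpha> \<in> E *)
definition locally_bounded_at :: "(complex \<Rightarrow> ereal) \<Rightarrow> complex set \<Rightarrow> bool" where
  "locally_bounded_at w E \<longleftrightarrow> (\<exists>B::nat. \<forall>a\<in>E. \<exists>f::complex poly.
      f \<noteq> 0 \<and> (\<forall>i. coeff f i \<in> Qp_part w) \<and> degree f \<le> B \<and> poly f a = 0)"

(* E closed in \<overline>{Z_p} (topology is metric, so sequential closedness) *)
definition closed_in_Zbar :: "(complex \<Rightarrow> ereal) \<Rightarrow> complex set \<Rightarrow> bool" where
  "closed_in_Zbar w E \<longleftrightarrow> (\<forall>x l. (\<forall>n. x n \<in> E) \<and> l \<in> Zbar w \<and> v_converges w x l \<longrightarrow> l \<in> E)"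

definition IntR :: "(nat \<Rightarrow> complex \<Rightarrow> ereal) \<Rightarrow> (nat \<Rightarrow> complex set) \<Rightarrow> rat poly set" where
  "IntR v E = {f. \<forall>p. prime p \<longrightarrow> (\<forall>a\<in>E p. 0 \<le> v p (poly (map_poly of_rat f) a))}"

definition IntRing :: "(nat \<Rightarrow> complex \<Rightarrow> ereal) \<Rightarrow> (nat \<Rightarrow> complex set) \<Rightarrow> rat poly ring" where
  "IntRing v E = \<lparr>carrier = IntR v E, monoid.mult = (*), one = 1, zero = 0, add = (+)\<rparr>"

end

theory Submission
  imports Defs "HOL-Library.Countable" "HOL-Computational_Algebra.Fundamental_Theorem_Algebra"
begin

locale vfield =
  fixes w :: "complex \<Rightarrow> ereal"
  assumes isv: "is_valuation w"
begin

lemma w0[simp]: "w 0 = \<infinity>" using isv unfolding is_valuation_def by auto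
lemma w_inf_iff[simp]: "w x = \<infinity> \<longleftrightarrow> x = 0" using isv unfolding is_valuation_def by auto
lemma w_not_minf[simp]: "w x \<noteq> -\<infinity>" using isv unfolding is_valuation_def by auto
lemma w_mult: "w (x * y) = w x + w y" using isv unfolding is_valuation_def by auto
lemma w_add: "min (w x) (w y) \<le> w (x + y)" using isv unfolding is_valuation_def by auto

lemma w_finite: "x \<noteq> 0 \<Longrightarrow> \<exists>r. w x = ereal r"
  by (cases "w x") auto

lemma w1[simp]: "w 1 = 0"
proof -
  have "w 1 = w 1 + w 1" using w_mult[of 1 1] by simp
  moreover obtain r where "w 1 = ereal r" using w_finite[of 1] by auto
  ultimately show ?thesis by (simp add: zero_ereal_def)
qed

lemma wm1[simp]: "w (-1) = 0"
proof -
  have "w 1 = w (-1) + w (-1)" using w_mult[of "-1" "-1"] by simp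
  moreover obtain r where "w (-1) = ereal r" using w_finite[of "-1"] by auto
  ultimately show ?thesis by (simp add: zero_ereal_def)
qed

lemma w_uminus[simp]: "w (-x) = w x"
  using w_mult[of "-1" x] by simp

lemma w_sub_sym: "w (x - y) = w (y - x)"
  by (metis minus_diff_eq w_uminus)

lemma w_diff: "min (w x) (w y) \<le> w (x - y)"
  using w_add[of x "-y"] by simp

lemma w_ge_add: "a \<le> w x \<Longrightarrow> a \<le> w y \<Longrightarrow> a \<le> w (x + y)"
  using w_add[of x y] by (metis min.bounded_iff order_trans)

lemma w_ge_diff: "a \<le> w x \<Longrightarrow> a \<le> w y \<Longrightarrow> a \<le> w (x - y)"
  using w_diff[of x y] by (metis min.bounded_iff order_trans)

lemma w_gt_add: "a < w x \<Longrightarrow> a < w y \<Longrightarrow> a < w (x + y)"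
  using w_add[of x y] by (metis min_less_iff_conj order_less_le_trans)

lemma w_gt_diff: "a < w x \<Longrightarrow> a < w y \<Longrightarrow> a < w (x - y)"
  using w_diff[of x y] by (metis min_less_iff_conj order_less_le_trans)

lemma w_strict: assumes "w x < w y" shows "w (x + y) = w x"
proof (rule antisym)
  show "w x \<le> w (x + y)" using w_add[of x y] assms by (simp add: min_def split: if_splits)
  show "w (x + y) \<le> w x"
  proof (rule ccontr)
    assume "\<not> w (x + y) \<le> w x"
    hence "w x < w (x + y)" by simp
    hence "w x < w ((x + y) - y)" using w_gt_diff assms by blast
    thus False by simp
  qed
qed

lemma w_strict': assumes "w x < w y" shows "w (y + x) = w x"
  using w_strict[OF assms] by (simp add: add.commute)

lemma w_sum_ge: "finite A \<Longrightarrow> (\<And>i. i \<in> A \<Longrightarrow> a \<le> w (f i)) \<Longrightarrow> a \<le> w (\<Sum>i\<in>A. f i)"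
  by (induction A rule: finite_induct) (auto intro: w_ge_add)

lemma w_sum_gt: "finite A \<Longrightarrow> a \<noteq> \<infinity> \<Longrightarrow> (\<And>i. i \<in> A \<Longrightarrow> a < w (f i)) \<Longrightarrow> a < w (\<Sum>i\<in>A. f i)"
  by (induction A rule: finite_induct) (auto intro: w_gt_add)

lemma w_prod: "finite A \<Longrightarrow> w (\<Prod>i\<in>A. f i) = (\<Sum>i\<in>A. w (f i))"
  by (induction A rule: finite_induct) (auto simp: w_mult)

lemma w_power: "w (x ^ n) = ereal (real n) * w x"
proof (induction n)
  case 0 then show ?case by simp
next
  case (Suc n)
  have "w (x ^ Suc n) = w x + ereal (real n) * w x" by (simp add: w_mult Suc)
  also have "\<dots> = ereal (real (Suc n)) * w x"
    by (cases "w x") (auto simp: algebra_simps)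
  finally show ?case .
qed

lemma w_power_nonneg: "0 \<le> w x \<Longrightarrow> 0 \<le> w (x ^ n)"
  by (simp add: w_power)

lemma w_power_pos: "0 < w x \<Longrightarrow> n > 0 \<Longrightarrow> 0 < w (x ^ n)"
  by (cases "w x") (auto simp: w_power ereal_zero_less_0_iff)

lemma w_inverse: "x \<noteq> 0 \<Longrightarrow> w (inverse x) = - w x"
proof -
  assume x: "x \<noteq> 0"
  have "w (x * inverse x) = 0" using x by simp
  hence "w x + w (inverse x) = 0" by (simp add: w_mult)
  moreover obtain r where "w x = ereal r" using w_finite x by auto
  moreover obtain s where "w (inverse x) = ereal s" using w_finite[of "inverse x"] x by auto
  ultimately show ?thesis by (simp add: zero_ereal_def)
qed

lemma w_prod_list: "w (prod_list xs) = sum_list (map w xs)"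
  by (induction xs) (auto simp: w_mult)

end


lemma ereal_add_lt: "ereal c \<le> A \<Longrightarrow> ereal d < B \<Longrightarrow> ereal (c + d) < A + B"
  by (cases A; cases B) auto

lemma ereal_add_le: "ereal c \<le> A \<Longrightarrow> ereal d \<le> B \<Longrightarrow> ereal (c + d) \<le> A + B"
  by (cases A; cases B) auto

context vfield
begin

lemma conv_bdd:
  assumes "v_converges w x l"
  shows "\<exists>c n1. \<forall>n\<ge>n1. ereal c \<le> w (x n)"
proof -
  obtain n1 where n1: "\<forall>n\<ge>n1. ereal 0 < w (x n - l)" using assms unfolding v_converges_def by blast
  show ?thesis
  proof (cases "l = 0")
    case True
    then show ?thesis using n1 by (intro exI[of _ 0] exI[of _ n1]) (auto simp: less_imp_le zero_ereal_def)
  next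
    case False
    then obtain r where r: "w l = ereal r" using w_finite by blast
    have "\<forall>n\<ge>n1. ereal (min r 0) \<le> w (x n)"
    proof (intro allI impI)
      fix n assume "n \<ge> n1"
      hence "ereal 0 < w (x n - l)" using n1 by auto
      hence "ereal (min r 0) \<le> w (x n - l)" by (meson dual_order.trans ereal_less_eq(3) less_imp_le min.cobounded2)
      moreover have "ereal (min r 0) \<le> w l" using r by auto
      ultimately have "ereal (min r 0) \<le> w ((x n - l) + l)" by (rule w_ge_add)
      thus "ereal (min r 0) \<le> w (x n)" by simp
    qed
    thus ?thesis by blast
  qed
qed

lemma conv_add: "v_converges w x l \<Longrightarrow> v_converges w y m \<Longrightarrow> v_converges w (\<lambda>n. x n + y n) (l + m)"
  unfolding v_converges_def
proof (intro allI)
  fix N :: real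
  assume a: "\<forall>N. \<exists>n0. \<forall>n\<ge>n0. ereal N < w (x n - l)" "\<forall>N. \<exists>n0. \<forall>n\<ge>n0. ereal N < w (y n - m)"
  obtain n1 where n1: "\<forall>n\<ge>n1. ereal N < w (x n - l)" using a(1) by blast
  obtain n2 where n2: "\<forall>n\<ge>n2. ereal N < w (y n - m)" using a(2) by blast
  have "\<forall>n\<ge>max n1 n2. ereal N < w ((x n - l) + (y n - m))" using n1 n2 by (auto intro: w_gt_add)
  moreover have "\<And>n. (x n - l) + (y n - m) = x n + y n - (l + m)" by (simp add: algebra_simps)
  ultimately show "\<exists>n0. \<forall>n\<ge>n0. ereal N < w (x n + y n - (l + m))" by metis
qed

lemma conv_uminus: "v_converges w x l \<Longrightarrow> v_converges w (\<lambda>n. - x n) (- l)"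
  unfolding v_converges_def by (metis minus_diff_eq minus_diff_minus w_uminus)

lemma conv_const: "v_converges w (\<lambda>n. c) c"
  unfolding v_converges_def by auto

lemma conv_mult:
  assumes x: "v_converges w x l" and y: "v_converges w y m"
  shows "v_converges w (\<lambda>n. x n * y n) (l * m)"
  unfolding v_converges_def
proof (intro allI)
  fix N :: real
  obtain c n1 where c: "\<forall>n\<ge>n1. ereal c \<le> w (x n)" using conv_bdd[OF x] by blast
  obtain n2 where n2: "\<forall>n\<ge>n2. ereal (N - c) < w (y n - m)" using y unfolding v_converges_def by blast
  have t1: "\<forall>n\<ge>max n1 n2. ereal N < w (x n * (y n - m))"
  proof (intro allI impI)
    fix n assume "n \<ge> max n1 n2"
    hence "ereal (c + (N - c)) < w (x n) + w (y n - m)" using c n2 by (intro ereal_add_lt) auto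
    thus "ereal N < w (x n * (y n - m))" by (simp add: w_mult)
  qed
  have "\<exists>n3. \<forall>n\<ge>n3. ereal N < w (m * (x n - l))"
  proof (cases "m = 0")
    case True then show ?thesis by simp
  next
    case False
    then obtain d where d: "w m = ereal d" using w_finite by blast
    obtain n3 where n3: "\<forall>n\<ge>n3. ereal (N - d) < w (x n - l)" using x unfolding v_converges_def by blast
    have "\<forall>n\<ge>n3. ereal N < w (m * (x n - l))"
    proof (intro allI impI)
      fix n assume "n \<ge> n3"
      hence "ereal (d + (N - d)) < w m + w (x n - l)" using d n3 by (intro ereal_add_lt) auto
      thus "ereal N < w (m * (x n - l))" by (simp add: w_mult)
    qed
    thus ?thesis by blast
  qed
  then obtain n3 where n3: "\<forall>n\<ge>n3. ereal N < w (m * (x n - l))" by blast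
  have "\<forall>n\<ge>max (max n1 n2) n3. ereal N < w (x n * (y n - m) + m * (x n - l))"
    using t1 n3 by (auto intro: w_gt_add)
  moreover have "\<And>n. x n * (y n - m) + m * (x n - l) = x n * y n - l * m" by (simp add: algebra_simps)
  ultimately show "\<exists>n0. \<forall>n\<ge>n0. ereal N < w (x n * y n - l * m)" by metis
qed

lemma conv_eventually_val:
  assumes x: "v_converges w x l" and l: "l \<noteq> 0"
  shows "\<exists>n1. \<forall>n\<ge>n1. w (x n) = w l"
proof -
  obtain r where r: "w l = ereal r" using w_finite l by blast
  obtain n1 where n1: "\<forall>n\<ge>n1. ereal r < w (x n - l)" using x unfolding v_converges_def by blast
  have "\<forall>n\<ge>n1. w (l + (x n - l)) = w l" using n1 r by (intro allI impI w_strict) auto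
  thus ?thesis by auto
qed

lemma conv_inverse:
  assumes x: "v_converges w x l" and l: "l \<noteq> 0"
  shows "v_converges w (\<lambda>n. inverse (x n)) (inverse l)"
  unfolding v_converges_def
proof (intro allI)
  fix N :: real
  obtain r where r: "w l = ereal r" using w_finite l by blast
  obtain n1 where n1: "\<forall>n\<ge>n1. w (x n) = w l" using conv_eventually_val[OF x l] by blast
  obtain n2 where n2: "\<forall>n\<ge>n2. ereal (N + 2 * r) < w (x n - l)" using x unfolding v_converges_def by blast
  have "\<forall>n\<ge>max n1 n2. ereal N < w (inverse (x n) - inverse l)"
  proof (intro allI impI)
    fix n assume n: "n \<ge> max n1 n2"
    have xn: "x n \<noteq> 0" using n1 n l by (metis max.boundedE w_inf_iff)
    have eq: "inverse (x n) - inverse l = (l - x n) * inverse (x n) * inverse l"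
      using xn l by (simp add: field_simps)
    have "w (inverse (x n) - inverse l) = w (x n - l) + (- w (x n)) + (- w l)"
      unfolding eq w_mult using xn l by (simp add: w_inverse w_sub_sym)
    also have "\<dots> = w (x n - l) + ereal (- 2 * r)" using n1 n r by (cases "w (x n - l)") auto
    finally show "ereal N < w (inverse (x n) - inverse l)" using n2 n
      by (cases "w (x n - l)") auto
  qed
  thus "\<exists>n0. \<forall>n\<ge>n0. ereal N < w (inverse (x n) - inverse l)" by blast
qed

lemma conv_unique:
  assumes "v_converges w x l" "v_converges w x m" shows "l = m"
proof -
  have "\<forall>N. ereal N < w (l - m)"
  proof
    fix N
    obtain n1 where "\<forall>n\<ge>n1. ereal N < w (x n - l)" using assms(1) unfolding v_converges_def by blast
    moreover obtain n2 where "\<forall>n\<ge>n2. ereal N < w (x n - m)" using assms(2) unfolding v_converges_def by blast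
    ultimately have "ereal N < w ((x (max n1 n2) - m) - (x (max n1 n2) - l))" using w_gt_diff[of N "x (max n1 n2) - m" "x (max n1 n2) - l"] by auto
    thus "ereal N < w (l - m)" by simp
  qed
  hence "w (l - m) = \<infinity>" by (cases "w (l - m)") (metis less_irrefl, auto)
  thus ?thesis by simp
qed

end


locale padic = vfield +
  fixes p :: nat
  assumes pp: "prime p" and model: "padic_closure_model p w"
begin

abbreviation "K \<equiv> Qp_part w"

lemma w_rat: "q \<noteq> 0 \<Longrightarrow> w (of_rat q) = ereal (of_int (padic_val_rat p q))"
  using model unfolding padic_closure_model_def by auto

lemma pvr_int: "padic_val_rat p (of_int n) = int (multiplicity (int p) n)"
  by (simp add: padic_val_rat_def multiplicity_one)

lemma w_of_int: "n \<noteq> 0 \<Longrightarrow> w (of_int n) = ereal (of_nat (multiplicity (int p) n))"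
  using w_rat[of "of_int n"] by (simp add: pvr_int)

lemma w_of_int_nonneg: "0 \<le> w (of_int n)"
  by (cases "n = 0") (auto simp: w_of_int)

lemma w_of_nat_nonneg: "0 \<le> w (of_nat n)"
  using w_of_int_nonneg[of "int n"] by simp

lemma w_of_int_dvd: assumes "(int p) ^ k dvd n" shows "ereal (real k) \<le> w (of_int n)"
proof (cases "n = 0")
  case True then show ?thesis by simp
next
  case False
  have "k \<le> multiplicity (int p) n"
    using assms False pp by (intro multiplicity_geI) (auto simp: prime_nat_iff)
  thus ?thesis using False by (simp add: w_of_int)
qed

lemma w_of_int_ndvd: assumes "\<not> int p dvd n" shows "w (of_int n) = 0"
proof -
  have n: "n \<noteq> 0" using assms by auto
  have "multiplicity (int p) n = 0"
    using assms n pp by (subst multiplicity_eq_zero_iff) (auto simp: prime_nat_iff)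
  thus ?thesis using n by (simp add: w_of_int zero_ereal_def)
qed

lemma w_p: "w (of_nat p) = 1"
proof -
  have "multiplicity (int p) (int p) = 1" using pp
    by (intro multiplicity_self) (auto simp: prime_nat_iff)
  thus ?thesis using w_of_int[of "int p"] pp by (auto simp: prime_nat_iff one_ereal_def)
qed

lemma rat_approx:
  assumes "q = 0 \<or> 0 \<le> padic_val_rat p q"
  shows "\<exists>m::int. ereal (real k) \<le> w (of_rat q - of_int m)"
proof -
  obtain a b where ab: "quotient_of q = (a, b)" by (cases "quotient_of q")
  have b0: "b > 0" using ab quotient_of_denom_pos by blast
  have cop: "coprime a b" using ab quotient_of_coprime by blast
  have qab: "q = of_int a / of_int b" using ab quotient_of_div by blast
  have pi: "prime (int p)" using pp by simp
  have nd: "\<not> int p dvd b"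
  proof
    assume pb: "int p dvd b"
    have "\<not> int p dvd a"
    proof
      assume "int p dvd a"
      hence "is_unit (int p)" using coprime_common_divisor[OF cop _ pb] by blast
      thus False using pi not_prime_unit by blast
    qed
    hence ma: "multiplicity (int p) a = 0" by (rule not_dvd_imp_multiplicity_0)
    have "multiplicity (int p) b \<ge> 1" using pb b0 pi not_prime_unit
      by (intro multiplicity_geI) auto
    hence "padic_val_rat p q < 0" using ma ab by (simp add: padic_val_rat_def)
    moreover have "q \<noteq> 0"
    proof
      assume "q = 0"
      hence "b = 1" using ab by (metis of_int_0 prod.inject quotient_of_rat_of_int)
      thus False using pb pi not_prime_unit by auto
    qed
    ultimately show False using assms by auto
  qed
  have c1: "coprime (int p) b" by (rule prime_imp_coprime[OF pi nd])
  have "coprime (int p ^ k) b" using c1 by simp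
  hence "coprime b (int p ^ k)" using coprime_commute by blast
  hence g1: "gcd b (int p ^ k) = 1" using coprime_iff_gcd_eq_1 by blast
  obtain u t where "u * b + t * (int p ^ k) = gcd b (int p ^ k)" using bezout_int by blast
  hence ut: "u * b + t * (int p ^ k) = 1" using g1 by simp
  have dv: "int p ^ k dvd (1 - b * u)" proof -
    have "1 - b * u = t * int p ^ k" using ut by (simp add: algebra_simps)
    thus ?thesis by simp
  qed
  have bnz: "(of_int b :: complex) \<noteq> 0" using b0 by simp
  have eq: "(of_rat q :: complex) - of_int (a * u) = of_int a * of_int (1 - b * u) * inverse (of_int b)"
    using bnz by (simp add: qab of_rat_divide field_simps)
  have wb: "w (of_int b) = 0" using w_of_int_ndvd nd by blast
  have "ereal (0 + real k) \<le> w (of_int a) + w (of_int (1 - b * u))"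
    using w_of_int_nonneg[of a] w_of_int_dvd[OF dv] by (intro ereal_add_le) (auto simp: zero_ereal_def)
  hence "ereal (real k) \<le> w (of_rat q - of_int (a * u))"
    unfolding eq using bnz wb by (simp add: w_mult w_inverse)
  thus ?thesis by blast
qed

end


context padic
begin

lemma K_rat: "of_rat q \<in> K"
  unfolding Qp_part_def using conv_const[of "of_rat q"] by (auto intro!: exI[of _ "\<lambda>n. q"])

lemma K_of_int: "of_int n \<in> K" using K_rat[of "of_int n"] by simp
lemma K_of_nat: "of_nat n \<in> K" using K_rat[of "of_nat n"] by simp
lemma K_0: "0 \<in> K" using K_rat[of 0] by simp
lemma K_1: "1 \<in> K" using K_rat[of 1] by simp

lemma K_add: "x \<in> K \<Longrightarrow> y \<in> K \<Longrightarrow> x + y \<in> K"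
  unfolding Qp_part_def
proof safe
  fix q r assume "v_converges w (\<lambda>n. of_rat (q n)) x" "v_converges w (\<lambda>n. of_rat (r n)) y"
  hence "v_converges w (\<lambda>n. of_rat (q n + r n)) (x + y)" using conv_add by (simp add: of_rat_add)
  thus "\<exists>s. v_converges w (\<lambda>n. of_rat (s n)) (x + y)" by (auto intro!: exI[of _ "\<lambda>n. q n + r n"])
qed

lemma K_uminus: "x \<in> K \<Longrightarrow> - x \<in> K"
  unfolding Qp_part_def
proof safe
  fix q assume "v_converges w (\<lambda>n. of_rat (q n)) x"
  hence "v_converges w (\<lambda>n. of_rat (- q n)) (- x)" using conv_uminus by (simp add: of_rat_minus)
  thus "\<exists>s. v_converges w (\<lambda>n. of_rat (s n)) (- x)" by (auto intro!: exI[of _ "\<lambda>n. - q n"])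
qed

lemma K_diff: "x \<in> K \<Longrightarrow> y \<in> K \<Longrightarrow> x - y \<in> K"
  using K_add[OF _ K_uminus] by (simp add: diff_conv_add_uminus del: add_uminus_conv_diff)

lemma K_mult: "x \<in> K \<Longrightarrow> y \<in> K \<Longrightarrow> x * y \<in> K"
  unfolding Qp_part_def
proof safe
  fix q r assume "v_converges w (\<lambda>n. of_rat (q n)) x" "v_converges w (\<lambda>n. of_rat (r n)) y"
  hence "v_converges w (\<lambda>n. of_rat (q n * r n)) (x * y)" using conv_mult by (simp add: of_rat_mult)
  thus "\<exists>s. v_converges w (\<lambda>n. of_rat (s n)) (x * y)" by (auto intro!: exI[of _ "\<lambda>n. q n * r n"])
qed

lemma K_inverse: "x \<in> K \<Longrightarrow> inverse x \<in> K"
proof (cases "x = 0")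
  case True then show ?thesis using K_0 by simp
next
  case False
  assume "x \<in> K"
  then obtain q where "v_converges w (\<lambda>n. of_rat (q n)) x" unfolding Qp_part_def by blast
  hence "v_converges w (\<lambda>n. of_rat (inverse (q n))) (inverse x)"
    using conv_inverse False by (simp add: of_rat_inverse)
  thus ?thesis unfolding Qp_part_def by (auto intro!: exI[of _ "\<lambda>n. inverse (q n)"])
qed

lemma K_divide: "x \<in> K \<Longrightarrow> y \<in> K \<Longrightarrow> x / y \<in> K"
  using K_mult K_inverse by (simp add: divide_inverse)

lemma K_sum: "(\<And>i. i \<in> A \<Longrightarrow> f i \<in> K) \<Longrightarrow> (\<Sum>i\<in>A. f i) \<in> K"
  by (induction A rule: infinite_finite_induct) (auto simp: K_0 K_add)

lemma K_power: "x \<in> K \<Longrightarrow> x ^ n \<in> K"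
  by (induction n) (auto simp: K_1 K_mult)

lemma K_val: assumes "x \<in> K" "x \<noteq> 0" shows "\<exists>n::int. w x = ereal n"
proof -
  obtain q where q: "v_converges w (\<lambda>n. of_rat (q n)) x" using assms(1) unfolding Qp_part_def by blast
  obtain n1 where n1: "\<forall>n\<ge>n1. w (of_rat (q n)) = w x" using conv_eventually_val[OF q assms(2)] by blast
  have "w (of_rat (q n1)) = w x" using n1 by simp
  moreover have "q n1 \<noteq> 0" using calculation assms(2) w_inf_iff by (metis of_rat_0)
  ultimately show ?thesis using w_rat by metis
qed

lemma K_approx: assumes "x \<in> K" "0 \<le> w x" shows "\<exists>m::int. ereal (real k) \<le> w (x - of_int m)"
proof -
  obtain q where q: "v_converges w (\<lambda>n. of_rat (q n)) x" using assms(1) unfolding Qp_part_def by blast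
  then obtain n1 where n1: "ereal (real k) < w (of_rat (q n1) - x)" unfolding v_converges_def by blast
  have "0 \<le> w (of_rat (q n1) - x)" using n1 by (meson ereal_less_eq(5) less_imp_le of_nat_0_le_iff order_trans)
  hence "0 \<le> w ((of_rat (q n1) - x) + x)" using assms(2) by (intro w_ge_add)
  hence "0 \<le> w (of_rat (q n1))" by simp
  hence "q n1 = 0 \<or> 0 \<le> padic_val_rat p (q n1)" using w_rat[of "q n1"] by (metis ereal_less_eq(5) of_int_0_le_iff)
  then obtain m where m: "ereal (real k) \<le> w (of_rat (q n1) - of_int m)" using rat_approx by blast
  have "ereal (real k) \<le> w ((of_rat (q n1) - of_int m) - (of_rat (q n1) - x))"
    using w_ge_diff[of "ereal (real k)" "of_rat (q n1) - of_int m" "of_rat (q n1) - x"] m n1 by auto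
  thus ?thesis by auto
qed

lemma K_complete: "(\<forall>n. x n \<in> K) \<Longrightarrow> v_cauchy w x \<Longrightarrow> \<exists>l\<in>K. v_converges w x l"
  using model unfolding padic_closure_model_def by blast

lemma K_alg: "\<exists>f::complex poly. f \<noteq> 0 \<and> (\<forall>i. coeff f i \<in> K) \<and> poly f a = 0"
  using model unfolding padic_closure_model_def by blast

end


definition ev :: "rat poly \<Rightarrow> complex \<Rightarrow> complex" where
  "ev f a = poly (map_poly of_rat f) a"

lemma map_poly_of_rat_add: "map_poly (of_rat :: rat \<Rightarrow> complex) (f + g) = map_poly of_rat f + map_poly of_rat g"
  by (rule poly_eqI) (simp add: coeff_map_poly of_rat_add)

lemma map_poly_of_rat_mult: "map_poly (of_rat :: rat \<Rightarrow> complex) (f * g) = map_poly of_rat f * map_poly of_rat g"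
  by (rule poly_eqI) (simp add: coeff_map_poly coeff_mult of_rat_sum of_rat_mult)

lemma map_poly_of_rat_uminus: "map_poly (of_rat :: rat \<Rightarrow> complex) (- f) = - map_poly of_rat f"
  by (rule poly_eqI) (simp add: coeff_map_poly of_rat_minus)

lemma ev_add[simp]: "ev (f + g) a = ev f a + ev g a"
  by (simp add: ev_def map_poly_of_rat_add)
lemma ev_mult[simp]: "ev (f * g) a = ev f a * ev g a"
  by (simp add: ev_def map_poly_of_rat_mult)
lemma ev_uminus[simp]: "ev (- f) a = - ev f a"
  by (simp add: ev_def map_poly_of_rat_uminus)
lemma ev_diff[simp]: "ev (f - g) a = ev f a - ev g a"
  using ev_add[of f "-g" a] by simp
lemma ev_const[simp]: "ev [:c:] a = of_rat c"
  by (cases "c = 0") (auto simp: ev_def map_poly_pCons)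
lemma ev_1[simp]: "ev 1 a = 1"
  by (simp add: ev_def)
lemma ev_0[simp]: "ev 0 a = 0"
  by (simp add: ev_def)
lemma ev_power[simp]: "ev (f ^ n) a = ev f a ^ n"
  by (induction n) auto
lemma ev_prod: "ev (\<Prod>i\<in>A. f i) a = (\<Prod>i\<in>A. ev (f i) a)"
  by (induction A rule: infinite_finite_induct) auto
lemma ev_altdef: "ev f a = (\<Sum>i\<le>degree f. of_rat (coeff f i) * a ^ i)"
proof -
  have "ev f a = (\<Sum>i\<le>degree (map_poly (of_rat :: rat \<Rightarrow> complex) f). coeff (map_poly of_rat f) i * a ^ i)"
    unfolding ev_def by (rule poly_altdef)
  also have "degree (map_poly (of_rat :: rat \<Rightarrow> complex) f) = degree f" by (rule degree_map_poly) simp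
  finally show ?thesis by (simp add: coeff_map_poly)
qed

definition alg_le :: "complex set \<Rightarrow> nat \<Rightarrow> complex \<Rightarrow> bool" where
  "alg_le S B y \<longleftrightarrow> (\<exists>c. (\<forall>i. c i \<in> S) \<and> (\<exists>i\<le>B. c i \<noteq> 0) \<and> (\<Sum>i\<le>B. c i * y ^ i) = 0)"

lemma alg_le_mono: assumes "alg_le S B y" "B \<le> B'" "0 \<in> S" shows "alg_le S B' y"
proof -
  obtain c where c: "\<forall>i. c i \<in> S" "\<exists>i\<le>B. c i \<noteq> 0" "(\<Sum>i\<le>B. c i * y ^ i) = 0"
    using assms(1) unfolding alg_le_def by blast
  define c' where "c' i = (if i \<le> B then c i else 0)" for i
  have "(\<Sum>i\<le>B'. c' i * y ^ i) = (\<Sum>i\<le>B. c' i * y ^ i)"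
    using assms(2) by (intro sum.mono_neutral_right) (auto simp: c'_def)
  also have "\<dots> = 0" using c(3) by (simp add: c'_def)
  finally show ?thesis unfolding alg_le_def using c assms(3) assms(2)
    by (intro exI[of _ c']) (auto simp: c'_def)
qed

lemma alg_of_poly:
  assumes "f \<noteq> 0" "\<forall>i. coeff f i \<in> S" "degree f \<le> B" "poly f a = 0"
  shows "alg_le S B a"
proof -
  have "poly f a = (\<Sum>i\<le>degree f. coeff f i * a ^ i)" by (rule poly_altdef)
  also have "\<dots> = (\<Sum>i\<le>B. coeff f i * a ^ i)"
    using assms(3) by (intro sum.mono_neutral_left) (auto simp: coeff_eq_0)
  finally have "(\<Sum>i\<le>B. coeff f i * a ^ i) = 0" using assms(4) by simp
  moreover have "coeff f (degree f) \<noteq> 0" using assms(1) by simp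
  ultimately show ?thesis unfolding alg_le_def using assms(2,3) by (intro exI[of _ "coeff f"]) auto
qed

context padic
begin

lemma alg_normalize:
  assumes "alg_le K B y"
  shows "\<exists>c k. (\<forall>i. c i \<in> K \<and> 0 \<le> w (c i)) \<and> k \<le> B \<and> c k = 1 \<and> (\<Sum>i\<le>B. c i * y ^ i) = 0"
proof -
  obtain c where c: "\<forall>i. c i \<in> K" "\<exists>i\<le>B. c i \<noteq> 0" "(\<Sum>i\<le>B. c i * y ^ i) = 0"
    using assms(1) unfolding alg_le_def by blast
  define I where "I = {i. i \<le> B \<and> c i \<noteq> 0}"
  have fI: "finite I" "I \<noteq> {}" using c(2) by (auto simp: I_def)
  define k where "k = arg_min_on (\<lambda>i. w (c i)) I"
  have kI: "k \<in> I" unfolding k_def using fI by (rule arg_min_if_finite)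
  have kmin: "\<And>i. i \<in> I \<Longrightarrow> w (c k) \<le> w (c i)"
    unfolding k_def using arg_min_if_finite(2)[OF fI] by (meson not_le)
  have ck: "c k \<noteq> 0" using kI by (auto simp: I_def)
  obtain r where r: "w (c k) = ereal r" using w_finite ck by blast
  define c' where "c' i = (if i \<le> B then c i / c k else 0)" for i
  have wc': "0 \<le> w (c' i)" for i
  proof (cases "i \<in> I")
    case True
    have "w (c' i) = w (c i) - w (c k)" unfolding c'_def divide_inverse
      using ck True by (simp add: w_mult w_inverse minus_ereal_def I_def)
    moreover have "w (c k) \<le> w (c i)" using kmin True by blast
    ultimately show "0 \<le> w (c' i)" using r by (cases "w (c i)") auto
  next
    case False
    hence "c' i = 0" by (auto simp: I_def c'_def)
    thus ?thesis by simp
  qed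
  have Kc': "c' i \<in> K" for i using c(1) K_divide K_0 by (simp add: c'_def)
  have "c' k = 1" using kI ck by (simp add: c'_def I_def)
  moreover have "(\<Sum>i\<le>B. c' i * y ^ i) = (\<Sum>i\<le>B. c i * y ^ i) / c k"
    by (simp add: c'_def sum_divide_distrib)
  ultimately show ?thesis using c(3) wc' Kc' kI by (intro exI[of _ c'] exI[of _ k]) (auto simp: I_def)
qed

end


lemma int_abs_lt1: "\<bar>real_of_int z\<bar> < 1 \<Longrightarrow> z = 0"
  by linarith

context padic
begin

lemma discrete:
  assumes alg: "alg_le K B y" and B: "B > 0" and pos: "0 < w y"
  shows "ereal (1 / real B) \<le> w y"
proof (rule ccontr)
  assume "\<not> ereal (1 / real B) \<le> w y"
  hence lt: "w y < ereal (1 / real B)" by simp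
  then obtain r where r: "w y = ereal r" using pos by (cases "w y") auto
  have r0: "0 < r" "r < 1 / real B" using pos lt r by auto
  have y0: "y \<noteq> 0" using r by auto
  obtain c where c: "\<forall>i. c i \<in> K" "\<exists>i\<le>B. c i \<noteq> 0" "(\<Sum>i\<le>B. c i * y ^ i) = 0"
    using alg unfolding alg_le_def by blast
  define I where "I = {i. i \<le> B \<and> c i \<noteq> 0}"
  have fI: "finite I" "I \<noteq> {}" using c(2) by (auto simp: I_def)
  have "\<forall>i\<in>I. \<exists>n::int. w (c i) = ereal n" using K_val c(1) by (auto simp: I_def)
  then obtain nn :: "nat \<Rightarrow> int" where nn: "\<And>i. i \<in> I \<Longrightarrow> w (c i) = ereal (real_of_int (nn i))" by metis
  have wt: "w (c i * y ^ i) = ereal (nn i + real i * r)" if "i \<in> I" for i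
    using nn[OF that] r by (simp add: w_mult w_power)
  define i0 where "i0 = arg_min_on (\<lambda>i. w (c i * y ^ i)) I"
  have i0I: "i0 \<in> I" unfolding i0_def using fI by (rule arg_min_if_finite)
  have i0min: "\<And>i. i \<in> I \<Longrightarrow> w (c i0 * y ^ i0) \<le> w (c i * y ^ i)"
    unfolding i0_def using arg_min_if_finite(2)[OF fI] by (meson not_le)
  have strict: "w (c i0 * y ^ i0) < w (c i * y ^ i)" if "i \<le> B" "i \<noteq> i0" for i
  proof (cases "i \<in> I")
    case False
    hence "c i = 0" using that by (auto simp: I_def)
    thus ?thesis using wt[OF i0I] by simp
  next
    case True
    have le: "nn i0 + real i0 * r \<le> nn i + real i * r" using i0min[OF True] wt[OF True] wt[OF i0I] by simp
    have ne: "nn i0 + real i0 * r \<noteq> nn i + real i * r"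
    proof
      assume eq: "nn i0 + real i0 * r = nn i + real i * r"
      define d where "d = real i - real i0"
      have "d * r = real_of_int (nn i0 - nn i)" using eq by (simp add: d_def algebra_simps)
      moreover have "\<bar>d\<bar> \<le> real B" using that i0I by (auto simp: d_def I_def)
      moreover have "\<bar>d\<bar> \<ge> 1" using that by (auto simp: d_def)
      ultimately have a: "\<bar>real_of_int (nn i0 - nn i)\<bar> < 1" "real_of_int (nn i0 - nn i) \<noteq> 0"
      proof -
        have "\<bar>d * r\<bar> = \<bar>d\<bar> * r" using r0 by (simp add: abs_mult)
        also have "\<dots> \<le> real B * r" using \<open>\<bar>d\<bar> \<le> real B\<close> r0 by (intro mult_right_mono) auto
        also have "\<dots> < real B * (1 / real B)" using r0 B by (intro mult_strict_left_mono) auto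
        also have "\<dots> = 1" using B by simp
        finally show "\<bar>real_of_int (nn i0 - nn i)\<bar> < 1" using \<open>d * r = _\<close> by simp
        have "\<bar>d * r\<bar> > 0" using \<open>\<bar>d\<bar> \<ge> 1\<close> r0 by (simp add: abs_mult)
        thus "real_of_int (nn i0 - nn i) \<noteq> 0" using \<open>d * r = _\<close> by auto
      qed
      thus False using int_abs_lt1 by force
    qed
    show ?thesis using le ne wt[OF True] wt[OF i0I] by simp
  qed
  have B0: "i0 \<le> B" using i0I by (auto simp: I_def)
  have split: "(\<Sum>i\<le>B. c i * y ^ i) = c i0 * y ^ i0 + (\<Sum>i\<in>{..B} - {i0}. c i * y ^ i)"
    using B0 by (subst sum.remove[of _ i0]) auto
  have fin: "w (c i0 * y ^ i0) \<noteq> \<infinity>" using wt[OF i0I] by simp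
  have "w (c i0 * y ^ i0) < w (\<Sum>i\<in>{..B} - {i0}. c i * y ^ i)"
    using strict fin by (intro w_sum_gt) auto
  hence "w (\<Sum>i\<le>B. c i * y ^ i) = w (c i0 * y ^ i0)" unfolding split by (rule w_strict)
  thus False using c(3) fin by simp
qed

end


context padic
begin

lemma steinitz:
  fixes u :: "nat \<Rightarrow> complex" and wv :: "nat \<Rightarrow> complex"
  assumes "finite J" "d < card J"
    and "\<forall>j\<in>J. \<exists>a. (\<forall>i. a i \<in> K) \<and> wv j = (\<Sum>i<d. a i * u i)"
  shows "\<exists>l. (\<forall>j. l j \<in> K) \<and> (\<exists>j\<in>J. l j \<noteq> 0) \<and> (\<Sum>j\<in>J. l j * wv j) = 0"
  using assms
proof (induction d arbitrary: J wv)
  case 0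
  hence "J \<noteq> {}" by auto
  moreover have "\<forall>j\<in>J. wv j = 0" using 0 by auto
  ultimately show ?case using K_1 by (intro exI[of _ "\<lambda>_. 1"]) auto
next
  case (Suc d)
  from Suc.prems(3) obtain a where a: "\<And>j. j \<in> J \<Longrightarrow> (\<forall>i. a j i \<in> K) \<and> wv j = (\<Sum>i<Suc d. a j i * u i)"
    by metis
  show ?case
  proof (cases "\<forall>j\<in>J. a j d = 0")
    case True
    have "\<forall>j\<in>J. \<exists>b. (\<forall>i. b i \<in> K) \<and> wv j = (\<Sum>i<d. b i * u i)"
      using a True by (intro ballI exI[of _ "a _"]) auto
    thus ?thesis using Suc.IH[of J wv] Suc.prems by auto
  next
    case False
    then obtain j0 where j0: "j0 \<in> J" "a j0 d \<noteq> 0" by blast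
    define J' where "J' = J - {j0}"
    define wv' where "wv' j = wv j - (a j d / a j0 d) * wv j0" for j
    have fJ': "finite J'" "d < card J'" using Suc.prems j0 by (auto simp: J'_def)
    have "\<forall>j\<in>J'. \<exists>b. (\<forall>i. b i \<in> K) \<and> wv' j = (\<Sum>i<d. b i * u i)"
    proof
      fix j assume j: "j \<in> J'"
      define b where "b i = a j i - (a j d / a j0 d) * a j0 i" for i
      have bK: "\<forall>i. b i \<in> K" using a j j0 by (auto simp: b_def J'_def intro!: K_diff K_mult K_divide)
      have "wv' j = (\<Sum>i<Suc d. b i * u i)"
        using a[of j] a[of j0] j j0 by (simp add: wv'_def b_def J'_def algebra_simps sum_subtractf sum_distrib_left)
      also have "\<dots> = (\<Sum>i<d. b i * u i)" using j0 by (simp add: b_def)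
      finally show "\<exists>b. (\<forall>i. b i \<in> K) \<and> wv' j = (\<Sum>i<d. b i * u i)" using bK by blast
    qed
    then obtain l where l: "\<forall>j. l j \<in> K" "\<exists>j\<in>J'. l j \<noteq> 0" "(\<Sum>j\<in>J'. l j * wv' j) = 0"
      using Suc.IH[OF fJ'] by blast
    define l' where "l' j = (if j = j0 then - (\<Sum>j\<in>J'. l j * (a j d / a j0 d)) else l j)" for j
    have "\<forall>j. l' j \<in> K" using l(1) a j0
      by (auto simp: l'_def J'_def intro!: K_uminus K_sum K_mult K_divide)
    moreover have "\<exists>j\<in>J. l' j \<noteq> 0" using l(2) by (auto simp: l'_def J'_def)
    moreover have "(\<Sum>j\<in>J. l' j * wv j) = 0"
    proof -
      have "(\<Sum>j\<in>J. l' j * wv j) = l' j0 * wv j0 + (\<Sum>j\<in>J'. l' j * wv j)"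
        using j0 Suc.prems(1) unfolding J'_def by (subst sum.remove[of _ j0]) auto
      also have "(\<Sum>j\<in>J'. l' j * wv j) = (\<Sum>j\<in>J'. l j * wv j)"
        by (intro sum.cong) (auto simp: l'_def J'_def)
      also have "(\<Sum>j\<in>J'. l j * wv j) = (\<Sum>j\<in>J'. l j * wv' j) + (\<Sum>j\<in>J'. l j * (a j d / a j0 d)) * wv j0"
      proof -
        have "(\<Sum>j\<in>J'. l j * wv' j) + (\<Sum>j\<in>J'. l j * (a j d / a j0 d)) * wv j0
            = (\<Sum>j\<in>J'. l j * wv' j + l j * (a j d / a j0 d) * wv j0)"
          by (simp add: sum.distrib sum_distrib_right)
        also have "\<dots> = (\<Sum>j\<in>J'. l j * wv j)" by (intro sum.cong) (auto simp: wv'_def algebra_simps)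
        finally show ?thesis by simp
      qed
      finally show ?thesis using l(3) by (simp add: l'_def)
    qed
    ultimately show ?thesis by blast
  qed
qed

end


context padic
begin

lemma alg_ev:
  assumes alg: "alg_le K B \<alpha>"
  shows "alg_le K B (ev f \<alpha>)"
proof -
  obtain c where c: "\<forall>i. c i \<in> K" "\<exists>i\<le>B. c i \<noteq> 0" "(\<Sum>i\<le>B. c i * \<alpha> ^ i) = 0"
    using alg unfolding alg_le_def by blast
  define D where "D = {i. i \<le> B \<and> c i \<noteq> 0}"
  have fD: "finite D" "D \<noteq> {}" using c(2) by (auto simp: D_def)
  define d where "d = Max D"
  have dD: "d \<in> D" using fD by (simp add: d_def)
  have dmax: "\<And>i. i \<le> B \<Longrightarrow> d < i \<Longrightarrow> c i = 0"
    using fD by (auto simp: d_def D_def)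
  have cd: "c d \<noteq> 0" "d \<le> B" using dD by (auto simp: D_def)
  have sumd: "(\<Sum>i\<le>d. c i * \<alpha> ^ i) = 0"
  proof -
    have "(\<Sum>i\<le>B. c i * \<alpha> ^ i) = (\<Sum>i\<le>d. c i * \<alpha> ^ i)"
      using cd dmax by (intro sum.mono_neutral_right) auto
    thus ?thesis using c(3) by simp
  qed
  have d0: "d > 0"
  proof (rule ccontr)
    assume "\<not> d > 0"
    hence "d = 0" by simp
    thus False using sumd cd by simp
  qed
  define inV where "inV x \<longleftrightarrow> (\<exists>a. (\<forall>i. a i \<in> K) \<and> x = (\<Sum>i<d. a i * \<alpha> ^ i))" for x
  have V_add: "inV x \<Longrightarrow> inV y \<Longrightarrow> inV (x + y)" for x y
    unfolding inV_def
  proof (elim exE conjE)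
    fix a b assume "\<forall>i. a i \<in> K" "x = (\<Sum>i<d. a i * \<alpha> ^ i)" "\<forall>i. b i \<in> K" "y = (\<Sum>i<d. b i * \<alpha> ^ i)"
    thus "\<exists>e. (\<forall>i. e i \<in> K) \<and> x + y = (\<Sum>i<d. e i * \<alpha> ^ i)"
      by (intro exI[of _ "\<lambda>i. a i + b i"]) (auto simp: K_add sum.distrib algebra_simps)
  qed
  have V_scal: "k \<in> K \<Longrightarrow> inV x \<Longrightarrow> inV (k * x)" for k x
    unfolding inV_def
  proof (elim exE conjE)
    fix a assume "k \<in> K" "\<forall>i. a i \<in> K" "x = (\<Sum>i<d. a i * \<alpha> ^ i)"
    thus "\<exists>e. (\<forall>i. e i \<in> K) \<and> k * x = (\<Sum>i<d. e i * \<alpha> ^ i)"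
      by (intro exI[of _ "\<lambda>i. k * a i"]) (auto simp: K_mult sum_distrib_left algebra_simps)
  qed
  have V_0: "inV 0" unfolding inV_def using K_0 by (intro exI[of _ "\<lambda>_. 0"]) auto
  have V_sum: "(\<And>i. i \<in> A \<Longrightarrow> inV (g i)) \<Longrightarrow> inV (\<Sum>i\<in>A. g i)" for A g
    by (induction A rule: infinite_finite_induct) (auto simp: V_0 V_add)
  have V_basis: "i < d \<Longrightarrow> inV (\<alpha> ^ i)" for i
    unfolding inV_def
  proof (intro exI[of _ "\<lambda>j. if j = i then 1 else 0"] conjI)
    assume "i < d"
    show "\<forall>j. (if j = i then 1 else 0) \<in> K" using K_0 K_1 by auto
    have "(\<Sum>j<d. (if j = i then 1 else 0) * \<alpha> ^ j) = (\<Sum>j<d. if j = i then \<alpha> ^ j else 0)"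
      by (intro sum.cong) auto
    also have "\<dots> = \<alpha> ^ i" using \<open>i < d\<close> by (simp add: sum.delta)
    finally show "\<alpha> ^ i = (\<Sum>j<d. (if j = i then 1 else 0) * \<alpha> ^ j)" by simp
  qed
  have V_top: "inV (\<alpha> ^ d)"
    unfolding inV_def
  proof (intro exI[of _ "\<lambda>i. - c i / c d"] conjI)
    show "\<forall>i. - c i / c d \<in> K" using c(1) by (auto intro!: K_divide K_uminus)
    have "(\<Sum>i\<le>d. c i * \<alpha> ^ i) = (\<Sum>i<d. c i * \<alpha> ^ i) + c d * \<alpha> ^ d"
      by (simp add: lessThan_Suc_atMost[symmetric])
    hence "c d * \<alpha> ^ d = - (\<Sum>i<d. c i * \<alpha> ^ i)" using sumd by (simp add: eq_neg_iff_add_eq_0 add.commute)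
    hence "\<alpha> ^ d = - (\<Sum>i<d. c i * \<alpha> ^ i) / c d" using cd by (simp add: field_simps)
    thus "\<alpha> ^ d = (\<Sum>i<d. - c i / c d * \<alpha> ^ i)" by (simp add: sum_divide_distrib sum_negf)
  qed
  have V_le: "i \<le> d \<Longrightarrow> inV (\<alpha> ^ i)" for i
    using V_basis V_top by (cases "i = d") auto
  have V_alpha: "inV x \<Longrightarrow> inV (\<alpha> * x)" for x
  proof -
    assume "inV x"
    then obtain a where a: "\<forall>i. a i \<in> K" "x = (\<Sum>i<d. a i * \<alpha> ^ i)" unfolding inV_def by blast
    have "\<alpha> * x = (\<Sum>i<d. a i * \<alpha> ^ Suc i)" by (simp add: a(2) sum_distrib_left algebra_simps)
    moreover have "inV (\<Sum>i<d. a i * \<alpha> ^ Suc i)"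
      using a(1) by (intro V_sum V_scal V_le) auto
    ultimately show ?thesis by simp
  qed
  have V_pow: "inV (\<alpha> ^ n)" for n
  proof (induction n)
    case 0 then show ?case using V_le[of 0] by simp
  next
    case (Suc n) then show ?case using V_alpha by simp
  qed
  have V_ev: "inV (ev g \<alpha>)" for g
    unfolding ev_altdef by (intro V_sum V_scal V_pow K_rat)
  have "\<forall>j\<in>{..d}. \<exists>a. (\<forall>i. a i \<in> K) \<and> ev f \<alpha> ^ j = (\<Sum>i<d. a i * \<alpha> ^ i)"
    using V_ev[of "f ^ _"] unfolding inV_def by simp
  then obtain l where l: "\<forall>j. l j \<in> K" "\<exists>j\<in>{..d}. l j \<noteq> 0" "(\<Sum>j\<le>d. l j * ev f \<alpha> ^ j) = 0"
    using steinitz[of "{..d}" d "\<lambda>j. ev f \<alpha> ^ j" "\<lambda>i. \<alpha> ^ i"] by auto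
  define c' where "c' j = (if j \<le> d then l j else 0)" for j
  have "(\<Sum>j\<le>B. c' j * ev f \<alpha> ^ j) = (\<Sum>j\<le>d. c' j * ev f \<alpha> ^ j)"
    using cd by (intro sum.mono_neutral_right) (auto simp: c'_def)
  also have "\<dots> = 0" using l(3) by (simp add: c'_def)
  finally show ?thesis unfolding alg_le_def using l cd K_0
    by (intro exI[of _ c']) (auto simp: c'_def)
qed

end


lemma one_le_pos: "ereal 1 \<le> x \<Longrightarrow> 0 < x"
  by (cases x) auto

lemma ereal_pos_add: "0 \<le> (a::ereal) \<Longrightarrow> 0 < b \<Longrightarrow> 0 < a + b"
  by (cases a; cases b) auto

lemma ereal_pos_add': "0 < (a::ereal) \<Longrightarrow> 0 \<le> b \<Longrightarrow> 0 < a + b"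
  by (cases a; cases b) auto

context padic
begin

lemma w_nonneg_mult: "0 \<le> w x \<Longrightarrow> 0 < w z \<Longrightarrow> 0 < w (x * z)"
  by (simp add: w_mult ereal_pos_add)

lemma residue:
  assumes alg: "alg_le K B y" and y0: "w y = 0"
  shows "0 < w (y ^ (fact (p ^ B) :: nat) - 1)"
proof -
  have pos_p: "int p > 0" "p > 0" using pp prime_gt_0_nat by auto
  obtain c k where ck: "\<forall>i. c i \<in> K \<and> 0 \<le> w (c i)" "k \<le> B" "c k = 1" "(\<Sum>i\<le>B. c i * y ^ i) = 0"
    using alg_normalize[OF alg] by blast
  have "\<forall>i. \<exists>m::int. ereal 1 \<le> w (c i - of_int m)" using K_approx[where k=1] ck(1) by simp
  then obtain a0 :: "nat \<Rightarrow> int" where a0: "\<And>i. ereal 1 \<le> w (c i - of_int (a0 i))" by metis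
  define a where "a i = (if i = k then 1 else a0 i)" for i
  have aa: "ereal 1 \<le> w (c i - of_int (a i))" for i using a0[of i] ck(3) by (auto simp: a_def)
  have wyi: "w (y ^ i) = 0" for i by (simp add: w_power y0)
  define S where "S = (\<Sum>i\<le>B. of_int (a i) * y ^ i)"
  have "S = (\<Sum>i\<le>B. of_int (a i) * y ^ i) - (\<Sum>i\<le>B. c i * y ^ i)" using ck(4) by (simp add: S_def)
  also have "\<dots> = (\<Sum>i\<le>B. of_int (a i) * y ^ i - c i * y ^ i)" by (simp only: sum_subtractf)
  also have "\<dots> = (\<Sum>i\<le>B. (of_int (a i) - c i) * y ^ i)" by (simp only: left_diff_distrib)
  finally have Seq: "S = (\<Sum>i\<le>B. (of_int (a i) - c i) * y ^ i)" .
  have wS: "0 < w S" unfolding Seq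
  proof (rule w_sum_gt)
    fix i
    have "ereal 1 \<le> w (of_int (a i) - c i)" using aa[of i] by (simp add: w_sub_sym)
    thus "0 < w ((of_int (a i) - c i) * y ^ i)" by (simp add: w_mult wyi one_le_pos)
  qed auto
  define E where "E = {i. i \<le> B \<and> \<not> int p dvd a i}"
  have kE: "k \<in> E" using ck(2) pp by (auto simp: E_def a_def)
  have fE: "finite E" by (auto simp: E_def)
  define e where "e = Max E"
  have eE: "e \<in> E" unfolding e_def using fE kE by (intro Max_in) auto
  have eB: "e \<le> B" "\<not> int p dvd a e" using eE by (auto simp: E_def)
  have emax: "int p dvd a i" if "i \<le> B" "e < i" for i
  proof (rule ccontr)
    assume "\<not> int p dvd a i"
    hence "i \<in> E" using that by (auto simp: E_def)
    hence "i \<le> e" unfolding e_def using fE by (simp add: Max_ge)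
    thus False using that by simp
  qed
  have pi: "prime (int p)" using pp by simp
  have "coprime (int p) (a e)" by (rule prime_imp_coprime[OF pi eB(2)])
  hence "gcd (a e) (int p) = 1" using coprime_iff_gcd_eq_1 coprime_commute by blast
  moreover obtain u t where "u * a e + t * int p = gcd (a e) (int p)" using bezout_int by blast
  ultimately have ut: "u * a e + t * int p = 1" by simp
  have pu: "int p dvd (1 - u * a e)"
  proof -
    have "1 - u * a e = t * int p" using ut by (simp add: algebra_simps)
    thus ?thesis by simp
  qed
  define d where "d i = (if i < e then 0 else if i = e then 1 - u * a e else - (u * a i))" for i
  have pd: "int p dvd d i" if "i \<le> B" for i
    using pu emax[OF that] by (auto simp: d_def)
  define s0 where "s0 = (\<Sum>i<e. of_int (- u * a i) * y ^ i)"
  have ident: "y ^ e - s0 = of_int u * S + (\<Sum>i\<le>B. of_int (d i) * y ^ i)"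
  proof -
    have "of_int u * S + (\<Sum>i\<le>B. of_int (d i) * y ^ i) = (\<Sum>i\<le>B. of_int (u * a i + d i) * y ^ i)"
      by (simp add: S_def sum_distrib_left sum.distrib[symmetric] algebra_simps)
    also have "\<dots> = (\<Sum>i\<le>B. (if i < e then of_int (u * a i) * y ^ i else 0) + (if i = e then y ^ i else 0))"
      by (intro sum.cong) (auto simp: d_def)
    also have "\<dots> = (\<Sum>i\<le>B. if i < e then of_int (u * a i) * y ^ i else 0) + (\<Sum>i\<le>B. if i = e then y ^ i else 0)"
      by (rule sum.distrib)
    also have "(\<Sum>i\<le>B. if i < e then of_int (u * a i) * y ^ i else 0) = (\<Sum>i\<in>{i\<in>{..B}. i < e}. of_int (u * a i) * y ^ i)"
      by (rule sum.inter_filter[symmetric]) simp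
    also have "{i\<in>{..B}. i < e} = {..<e}" using eB by auto
    also have "(\<Sum>i\<le>B. if i = e then y ^ i else 0) = y ^ e" using eB by simp
    finally show ?thesis by (simp add: s0_def sum_negf)
  qed
  have w1: "0 < w (of_int u * S)" using w_of_int_nonneg wS by (intro w_nonneg_mult)
  have w2: "0 < w (\<Sum>i\<le>B. of_int (d i) * y ^ i)"
  proof (rule w_sum_gt)
    fix i assume "i \<in> {..B}"
    hence "ereal (real 1) \<le> w (of_int (d i))" using pd w_of_int_dvd[of 1 "d i"] by auto
    thus "0 < w (of_int (d i) * y ^ i)" by (simp add: w_mult wyi one_le_pos)
  qed auto
  have top: "0 < w (y ^ e - s0)" unfolding ident using w1 w2 by (rule w_gt_add)
  define inZ where "inZ x \<longleftrightarrow> (\<exists>b::nat\<Rightarrow>int. x = (\<Sum>i<e. of_int (b i) * y ^ i))" for x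
  define nearZ where "nearZ x \<longleftrightarrow> (\<exists>s. inZ s \<and> 0 < w (x - s))" for x
  have nZ_add: "nearZ x \<Longrightarrow> nearZ x' \<Longrightarrow> nearZ (x + x')" for x x'
  proof -
    assume "nearZ x" "nearZ x'"
    then obtain s s' b b' where h: "0 < w (x - s)" "0 < w (x' - s')" "s = (\<Sum>i<e. of_int (b i) * y ^ i)"
        "s' = (\<Sum>i<e. of_int (b' i) * y ^ i)" unfolding nearZ_def inZ_def by blast
    have "0 < w ((x - s) + (x' - s'))" using h(1) h(2) by (rule w_gt_add)
    moreover have "(x - s) + (x' - s') = x + x' - (s + s')" by simp
    ultimately have 1: "0 < w (x + x' - (s + s'))" by simp
    have "s + s' = (\<Sum>i<e. of_int (b i) * y ^ i + of_int (b' i) * y ^ i)"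
      using h(3,4) by (simp only: sum.distrib)
    also have "\<dots> = (\<Sum>i<e. of_int (b i + b' i) * y ^ i)"
      by (intro sum.cong refl) (simp add: distrib_right)
    finally have 2: "inZ (s + s')" unfolding inZ_def by (intro exI[of _ "\<lambda>i. b i + b' i"])
    show ?thesis unfolding nearZ_def using 1 2 by blast
  qed
  have nZ_int: "nearZ x \<Longrightarrow> nearZ (of_int n * x)" for x n
  proof -
    assume "nearZ x"
    then obtain s b where h: "0 < w (x - s)" "s = (\<Sum>i<e. of_int (b i) * y ^ i)"
      unfolding nearZ_def inZ_def by blast
    have "0 < w (of_int n * (x - s))" using w_of_int_nonneg h(1) by (rule w_nonneg_mult)
    moreover have "of_int n * (x - s) = of_int n * x - of_int n * s" by (simp add: right_diff_distrib)
    ultimately have 1: "0 < w (of_int n * x - of_int n * s)" by simp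
    have "of_int n * s = (\<Sum>i<e. of_int n * (of_int (b i) * y ^ i))"
      using h(2) by (simp only: sum_distrib_left)
    also have "\<dots> = (\<Sum>i<e. of_int (n * b i) * y ^ i)"
      by (intro sum.cong refl) simp
    finally have 2: "inZ (of_int n * s)" unfolding inZ_def by (intro exI[of _ "\<lambda>i. n * b i"])
    show ?thesis unfolding nearZ_def using 1 2 by blast
  qed
  have nZ_0: "nearZ 0" unfolding nearZ_def inZ_def by (intro exI[of _ 0] conjI exI[of _ "\<lambda>_. 0"]) auto
  have nZ_sum: "(\<And>i. i \<in> A \<Longrightarrow> nearZ (f i)) \<Longrightarrow> nearZ (\<Sum>i\<in>A. f i)" for A f
    by (induction A rule: infinite_finite_induct) (auto simp: nZ_0 nZ_add)
  have nZ_le: "i \<le> e \<Longrightarrow> nearZ (y ^ i)" for i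
  proof (cases "i = e")
    case True
    have "inZ s0" unfolding inZ_def s0_def by (intro exI[of _ "\<lambda>i. - u * a i"]) simp
    thus ?thesis using top True unfolding nearZ_def by blast
  next
    case False
    assume "i \<le> e"
    hence ie: "i < e" using False by simp
    have "(\<Sum>j<e. of_int (if j = i then 1 else 0) * y ^ j) = (\<Sum>j<e. if j = i then y ^ j else 0)"
      by (intro sum.cong) auto
    also have "\<dots> = y ^ i" using ie by (simp add: sum.delta)
    finally have "inZ (y ^ i)" unfolding inZ_def by (intro exI[of _ "\<lambda>j. if j = i then 1 else 0"]) simp
    thus ?thesis unfolding nearZ_def by (intro exI[of _ "y ^ i"]) simp
  qed
  have nZ_pow: "nearZ (y ^ j)" for j
  proof (induction j)
    case 0 then show ?case using nZ_le[of 0] by simp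
  next
    case (Suc j)
    then obtain s b where sb: "0 < w (y ^ j - s)" "s = (\<Sum>i<e. of_int (b i) * y ^ i)"
      unfolding nearZ_def inZ_def by blast
    have "y * s = (\<Sum>i<e. of_int (b i) * y ^ Suc i)" by (simp add: sb(2) sum_distrib_left algebra_simps)
    moreover have "nearZ (\<Sum>i<e. of_int (b i) * y ^ Suc i)"
      by (intro nZ_sum nZ_int nZ_le) auto
    ultimately obtain t where t: "inZ t" "0 < w (y * s - t)" unfolding nearZ_def by auto
    have "0 < w (y * (y ^ j - s))" using sb(1) y0 by (simp add: w_mult)
    hence "0 < w (y * (y ^ j - s) + (y * s - t))" using t(2) by (rule w_gt_add)
    moreover have "y * (y ^ j - s) + (y * s - t) = y ^ Suc j - t" by (simp add: algebra_simps)
    ultimately show ?case using t(1) unfolding nearZ_def by auto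
  qed
  define L where "L = {bs. set bs \<subseteq> {0..<int p} \<and> length bs = e}"
  define T where "T = (\<lambda>bs. \<Sum>i<e. of_int (bs ! i) * y ^ i) ` L"
  have fL: "finite L" unfolding L_def by (intro finite_lists_length_eq) auto
  have cL: "card L = p ^ e" unfolding L_def by (subst card_lists_length_eq) auto
  have fT: "finite T" using fL by (simp add: T_def)
  have cT: "card T \<le> p ^ B"
  proof -
    have "card T \<le> card L" unfolding T_def using fL by (rule card_image_le)
    also have "\<dots> \<le> p ^ B" using cL eB pos_p by (simp add: power_increasing)
    finally show ?thesis .
  qed
  have nT: "\<exists>t\<in>T. 0 < w (y ^ j - t)" for j
  proof -
    obtain s b where sb: "0 < w (y ^ j - s)" "s = (\<Sum>i<e. of_int (b i) * y ^ i)"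
      using nZ_pow[of j] unfolding nearZ_def inZ_def by blast
    define bs where "bs = map (\<lambda>i. b i mod int p) [0..<e]"
    have bsL: "bs \<in> L" using pos_p by (auto simp: L_def bs_def)
    define t where "t = (\<Sum>i<e. of_int (bs ! i) * y ^ i)"
    have tT: "t \<in> T" using bsL by (auto simp: T_def t_def)
    have "t = (\<Sum>i<e. of_int (b i mod int p) * y ^ i)" unfolding t_def
      by (intro sum.cong) (auto simp: bs_def)
    hence "s - t = (\<Sum>i<e. of_int (b i - b i mod int p) * y ^ i)"
      by (simp add: sb(2) sum_subtractf algebra_simps)
    also have "\<dots> = (\<Sum>i<e. of_int (int p * (b i div int p)) * y ^ i)"
      by (simp add: minus_mod_eq_mult_div)
    finally have st: "s - t = (\<Sum>i<e. of_int (int p * (b i div int p)) * y ^ i)" .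
    have "0 < w (s - t)" unfolding st
    proof (rule w_sum_gt)
      fix i
      have "ereal (real 1) \<le> w (of_int (int p * (b i div int p)))" by (intro w_of_int_dvd) simp
      thus "0 < w (of_int (int p * (b i div int p)) * y ^ i)"
        by (simp add: w_mult wyi one_le_pos)
    qed auto
    hence "0 < w ((y ^ j - s) + (s - t))" using sb(1) w_gt_add by blast
    thus ?thesis using tT by auto
  qed
  define g where "g j = (SOME t. t \<in> T \<and> 0 < w (y ^ j - t))" for j
  have g: "g j \<in> T" "0 < w (y ^ j - g j)" for j
    using someI_ex[OF nT[of j, unfolded Bex_def]] by (auto simp: g_def)
  have "\<not> inj_on g {..p ^ B}"
  proof
    assume "inj_on g {..p ^ B}"
    hence "card {..p ^ B} \<le> card T" using g(1) fT by (intro card_inj_on_le) auto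
    thus False using cT by simp
  qed
  then obtain i j where ij: "i \<le> p ^ B" "j \<le> p ^ B" "i \<noteq> j" "g i = g j" unfolding inj_on_def by auto
  have near: "0 < w (y ^ i - y ^ j)"
  proof -
    have "0 < w ((y ^ i - g i) - (y ^ j - g j))" using g(2)[of i] g(2)[of j] by (rule w_gt_diff)
    thus ?thesis using ij(4) by simp
  qed
  have "\<exists>D. 1 \<le> D \<and> D \<le> p ^ B \<and> 0 < w (y ^ D - 1)"
  proof (cases "i < j")
    case True
    have "y ^ j - y ^ i = y ^ i * (y ^ (j - i) - 1)" using True by (simp add: algebra_simps power_add[symmetric])
    hence "0 < w (y ^ (j - i) - 1)" using near by (simp add: w_sub_sym[of "y ^ i"] w_mult wyi)
    thus ?thesis using True ij by (intro exI[of _ "j - i"]) auto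
  next
    case False
    hence ji: "j < i" using ij(3) by simp
    have "y ^ i - y ^ j = y ^ j * (y ^ (i - j) - 1)" using ji by (simp add: algebra_simps power_add[symmetric])
    hence "0 < w (y ^ (i - j) - 1)" using near by (simp add: w_mult wyi)
    thus ?thesis using ji ij by (intro exI[of _ "i - j"]) auto
  qed
  then obtain D where D: "1 \<le> D" "D \<le> p ^ B" "0 < w (y ^ D - 1)" by blast
  have "D dvd fact (p ^ B)" using D by (intro dvd_fact) auto
  then obtain m where m: "(fact (p ^ B) :: nat) = D * m" by blast
  have "y ^ (fact (p ^ B) :: nat) - 1 = (y ^ D) ^ m - 1 ^ m" by (simp add: m power_mult)
  also have "\<dots> = (y ^ D - 1) * (\<Sum>i<m. 1 ^ (m - Suc i) * (y ^ D) ^ i)" by (rule power_diff_sumr2)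
  finally have eq: "y ^ (fact (p ^ B) :: nat) - 1 = (y ^ D - 1) * (\<Sum>i<m. (y ^ D) ^ i)" by simp
  have "0 \<le> w (\<Sum>i<m. (y ^ D) ^ i)" by (rule w_sum_ge) (auto simp: wyi simp flip: power_mult)
  thus ?thesis unfolding eq w_mult using D(3) by (simp add: ereal_pos_add')
qed

end


definition conv_on :: "(complex \<Rightarrow> ereal) \<Rightarrow> nat set \<Rightarrow> (nat \<Rightarrow> complex) \<Rightarrow> complex \<Rightarrow> bool" where
  "conv_on w S x l \<longleftrightarrow> (\<forall>N::real. \<exists>n0. \<forall>n\<in>S. n \<ge> n0 \<longrightarrow> ereal N < w (x n - l))"

lemma conv_on_subset: "conv_on w S x l \<Longrightarrow> S' \<subseteq> S \<Longrightarrow> conv_on w S' x l"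
  unfolding conv_on_def by blast

lemma pigeon_inf:
  assumes "infinite A" "\<forall>n\<in>A. f n \<in> F" "finite F"
  shows "\<exists>c\<in>F. infinite {n\<in>A. f n = c}"
proof (rule ccontr)
  assume "\<not> ?thesis"
  hence "finite (\<Union>c\<in>F. {n\<in>A. f n = c})" using assms(3) by auto
  moreover have "A \<subseteq> (\<Union>c\<in>F. {n\<in>A. f n = c})" using assms(2) by auto
  ultimately show False using assms(1) finite_subset by blast
qed

context padic
begin

lemma K_residue:
  assumes "y \<in> K" "0 \<le> w y"
  shows "\<exists>m. m \<in> {0..<int p ^ k} \<and> ereal (real k) \<le> w (y - of_int m)"
proof -
  obtain m0 where m0: "ereal (real k) \<le> w (y - of_int m0)" using K_approx assms by blast
  have pk: "int p ^ k > 0" using pp prime_gt_0_nat by simp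
  define m where "m = m0 mod int p ^ k"
  have "m \<in> {0..<int p ^ k}" using pk by (simp add: m_def)
  moreover have A: "ereal (real k) \<le> w (of_int (m0 - m))"
    by (intro w_of_int_dvd) (simp add: m_def minus_mod_eq_mult_div)
  have "ereal (real k) \<le> w ((y - of_int m0) + of_int (m0 - m))" by (rule w_ge_add[OF m0 A])
  ultimately show ?thesis by (intro exI[of _ m]) simp
qed

lemma compact_OK:
  assumes S: "infinite S" and x: "\<forall>n\<in>S. x n \<in> K \<and> 0 \<le> w (x n)"
  shows "\<exists>S'\<subseteq>S. infinite S' \<and> (\<exists>l\<in>K. 0 \<le> w l \<and> conv_on w S' x l)"
proof -
  define \<rho> where "\<rho> k y = (SOME m. m \<in> {0..<int p ^ k} \<and> ereal (real k) \<le> w (y - of_int m))" for k y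
  have \<rho>: "\<rho> k (x n) \<in> {0..<int p ^ k} \<and> ereal (real k) \<le> w (x n - of_int (\<rho> k (x n)))" if "n \<in> S" for k n
  proof -
    have "\<exists>m. m \<in> {0..<int p ^ k} \<and> ereal (real k) \<le> w (x n - of_int m)"
      using K_residue[of "x n" k] x that by blast
    from someI_ex[OF this] show ?thesis unfolding \<rho>_def .
  qed
  define step where "step k A = {n\<in>A. \<rho> (Suc k) (x n) = (SOME c. infinite {n\<in>A. \<rho> (Suc k) (x n) = c})}" for k A
  define T where "T = rec_nat S step"
  have T0: "T 0 = S" by (simp add: T_def)
  have TS: "T (Suc k) = step k (T k)" for k by (simp add: T_def)
  have Tsub: "T (Suc k) \<subseteq> T k" for k by (auto simp: TS step_def)
  have TS': "T k \<subseteq> S" for k by (induction k) (use Tsub T0 in auto)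
  have Tinf: "infinite (T k)" for k
  proof (induction k)
    case 0 then show ?case using S T0 by simp
  next
    case (Suc k)
    have "\<forall>n\<in>T k. \<rho> (Suc k) (x n) \<in> {0..<int p ^ Suc k}"
    proof
      fix n assume "n \<in> T k"
      hence "n \<in> S" using TS' by blast
      thus "\<rho> (Suc k) (x n) \<in> {0..<int p ^ Suc k}" using \<rho>[of n "Suc k"] by blast
    qed
    from pigeon_inf[OF Suc.IH this finite_atLeastLessThan_int]
    obtain c where "infinite {n\<in>T k. \<rho> (Suc k) (x n) = c}" by blast
    hence "infinite {n\<in>T k. \<rho> (Suc k) (x n) = (SOME c. infinite {n\<in>T k. \<rho> (Suc k) (x n) = c})}"
      by (rule someI)
    thus ?case by (simp add: TS step_def)
  qed
  have Tanti: "k \<le> j \<Longrightarrow> T j \<subseteq> T k" for j k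
    by (induction j rule: dec_induct) (use Tsub in auto)
  have Tclose: "ereal (real k) \<le> w (x n - x m)" if "n \<in> T k" "m \<in> T k" for k n m
  proof (cases k)
    case 0
    have "n \<in> S" "m \<in> S" using that TS' by auto
    hence "0 \<le> w (x n)" "0 \<le> w (x m)" using x by auto
    hence "0 \<le> w (x n - x m)" by (rule w_ge_diff)
    thus ?thesis using 0 by (simp add: zero_ereal_def)
  next
    case (Suc k')
    define c where "c = (SOME c. infinite {n\<in>T k'. \<rho> (Suc k') (x n) = c})"
    have "\<rho> (Suc k') (x n) = c" "\<rho> (Suc k') (x m) = c" using that Suc by (auto simp: TS step_def c_def)
    moreover have "n \<in> S" "m \<in> S" using that TS' by auto
    ultimately have "ereal (real k) \<le> w (x n - of_int c)" "ereal (real k) \<le> w (x m - of_int c)"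
      using \<rho>[of n "Suc k'"] \<rho>[of m "Suc k'"] Suc by auto
    hence "ereal (real k) \<le> w ((x n - of_int c) - (x m - of_int c))" by (rule w_ge_diff)
    thus ?thesis by simp
  qed
  have unb: "\<exists>n. n \<in> T k \<and> n > m" for k m
    using Tinf[of k] unfolding infinite_nat_iff_unbounded by blast
  define t where "t = rec_nat (LEAST n. n \<in> T 0) (\<lambda>k tk. LEAST n. n \<in> T (Suc k) \<and> n > tk)"
  have t0: "t 0 = (LEAST n. n \<in> T 0)" by (simp add: t_def)
  have tS: "t (Suc k) = (LEAST n. n \<in> T (Suc k) \<and> n > t k)" for k by (simp add: t_def)
  have tT: "t k \<in> T k" for k
  proof (cases k)
    case 0 then show ?thesis using unb[of 0 0] by (auto simp: t0 intro: LeastI_ex)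
  next
    case (Suc k') then show ?thesis using unb[of "Suc k'" "t k'"] LeastI_ex[of "\<lambda>n. n \<in> T (Suc k') \<and> n > t k'"]
      by (auto simp: tS)
  qed
  have tlt: "t k < t (Suc k)" for k
    using unb[of "Suc k" "t k"] LeastI_ex[of "\<lambda>n. n \<in> T (Suc k) \<and> n > t k"] by (auto simp: tS)
  have smt: "strict_mono t" using tlt by (simp add: strict_mono_Suc_iff)
  define z where "z k = x (t k)" for k
  have zK: "\<forall>k. z k \<in> K" using x tT TS' by (auto simp: z_def)
  have "v_cauchy w z" unfolding v_cauchy_def
  proof
    fix N :: real
    define n0 where "n0 = nat \<lceil>N\<rceil> + 1"
    have "\<forall>m\<ge>n0. \<forall>n\<ge>n0. ereal N < w (z m - z n)"
    proof (intro allI impI)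
      fix m n assume "m \<ge> n0" "n \<ge> n0"
      hence "t m \<in> T n0" "t n \<in> T n0" using tT Tanti by blast+
      hence "ereal (real n0) \<le> w (z m - z n)" unfolding z_def by (rule Tclose)
      moreover have "N < real n0" unfolding n0_def by linarith
      hence "ereal N < ereal (real n0)" by simp
      ultimately show "ereal N < w (z m - z n)" using order_less_le_trans by blast
    qed
    thus "\<exists>n0. \<forall>m\<ge>n0. \<forall>n\<ge>n0. ereal N < w (z m - z n)" by blast
  qed
  then obtain l where l: "l \<in> K" "v_converges w z l" using K_complete zK by blast
  have S'S: "range t \<subseteq> S" using tT TS' by blast
  have S'inf: "infinite (range t)" using smt by (simp add: range_inj_infinite strict_mono_imp_inj_on)
  have conv: "conv_on w (range t) x l" unfolding conv_on_def
  proof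
    fix N :: real
    obtain k0 where k0: "\<forall>k\<ge>k0. ereal N < w (z k - l)" using l(2) unfolding v_converges_def by blast
    have "\<forall>n\<in>range t. n \<ge> t k0 \<longrightarrow> ereal N < w (x n - l)"
    proof (intro ballI impI)
      fix n assume "n \<in> range t" "n \<ge> t k0"
      then obtain k where k: "n = t k" by blast
      hence "k \<ge> k0" using \<open>n \<ge> t k0\<close> smt by (simp add: strict_mono_less_eq)
      thus "ereal N < w (x n - l)" using k0 k by (simp add: z_def)
    qed
    thus "\<exists>n0. \<forall>n\<in>range t. n \<ge> n0 \<longrightarrow> ereal N < w (x n - l)" by blast
  qed
  have "0 \<le> w l"
  proof -
    obtain k0 where k0: "\<forall>k\<ge>k0. ereal 0 < w (z k - l)" using l(2) unfolding v_converges_def by blast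
    have "0 \<le> w (z k0)" using x tT TS' by (auto simp: z_def)
    moreover have "0 \<le> w (z k0 - l)" using k0 by (simp add: less_imp_le zero_ereal_def)
    ultimately have "0 \<le> w (z k0 - (z k0 - l))" by (rule w_ge_diff)
    thus ?thesis by simp
  qed
  thus ?thesis using S'S S'inf conv l(1) by blast
qed

end


lemma poly_factor_complex:
  fixes H :: "complex poly"
  assumes "H \<noteq> 0"
  shows "\<exists>a rs. a \<noteq> 0 \<and> (\<forall>x. poly H x = a * prod_list (map (\<lambda>r. x - r) rs))"
  using assms
proof (induction "degree H" arbitrary: H)
  case 0
  then obtain a where "H = [:a:]" by (metis degree_eq_zeroE)
  thus ?case using 0 by (intro exI[of _ a] exI[of _ "[]"]) auto
next
  case (Suc n)
  have "\<not> constant (poly H)" using Suc.hyps(2) by (simp add: constant_degree)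
  then obtain z where "poly H z = 0" using fundamental_theorem_of_algebra by blast
  then obtain Q where Q: "H = [:-z, 1:] * Q" using poly_eq_0_iff_dvd by (metis dvdE)
  have Q0: "Q \<noteq> 0" using Q Suc.prems by auto
  have "degree H = degree [:-z, 1:] + degree Q" unfolding Q by (rule degree_mult_eq) (auto simp: Q0)
  hence "degree H = 1 + degree Q" by simp
  hence "n = degree Q" using Suc.hyps(2) by simp
  then obtain a rs where ars: "a \<noteq> 0" "\<forall>x. poly Q x = a * prod_list (map (\<lambda>r. x - r) rs)"
    using Suc.hyps(1) Q0 by blast
  have "\<forall>x. poly H x = a * prod_list (map (\<lambda>r. x - r) (z # rs))"
  proof
    fix x
    have "poly H x = (x - z) * poly Q x" unfolding Q by (simp add: algebra_simps)
    thus "poly H x = a * prod_list (map (\<lambda>r. x - r) (z # rs))" using ars by (simp add: algebra_simps)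
  qed
  thus ?case using ars(1) by blast
qed

lemma sum_list_ereal_le: "(\<forall>x\<in>set xs. f x \<le> ereal c) \<Longrightarrow> sum_list (map f xs) \<le> ereal (real (length xs) * c)"
proof (induction xs)
  case Nil then show ?case by (simp add: zero_ereal_def)
next
  case (Cons y ys)
  have "f y + sum_list (map f ys) \<le> ereal c + ereal (real (length ys) * c)"
    using Cons by (intro add_mono) auto
  thus ?case by (simp add: algebra_simps)
qed

context padic
begin

lemma compact_multi:
  fixes c :: "nat \<Rightarrow> nat \<Rightarrow> complex" and m :: nat
  assumes S: "infinite S" and c: "\<forall>n\<in>S. \<forall>i. c n i \<in> K \<and> 0 \<le> w (c n i)"
  shows "\<exists>S'\<subseteq>S. infinite S' \<and> (\<exists>L. \<forall>i<m. L i \<in> K \<and> 0 \<le> w (L i) \<and> conv_on w S' (\<lambda>n. c n i) (L i))"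
proof (induction m)
  case 0 then show ?case using S by blast
next
  case (Suc m)
  then obtain S' L where S': "S' \<subseteq> S" "infinite S'" "\<forall>i<m. L i \<in> K \<and> 0 \<le> w (L i) \<and> conv_on w S' (\<lambda>n. c n i) (L i)"
    by blast
  have "\<forall>n\<in>S'. c n m \<in> K \<and> 0 \<le> w (c n m)" using c S'(1) by blast
  from compact_OK[OF S'(2) this] obtain S'' l where S'': "S'' \<subseteq> S'" "infinite S''" "l \<in> K" "0 \<le> w l" "conv_on w S'' (\<lambda>n. c n m) l"
    by blast
  have "\<forall>i<Suc m. (L(m := l)) i \<in> K \<and> 0 \<le> w ((L(m := l)) i) \<and> conv_on w S'' (\<lambda>n. c n i) ((L(m := l)) i)"
  proof (intro allI impI)
    fix i assume "i < Suc m"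
    show "(L(m := l)) i \<in> K \<and> 0 \<le> w ((L(m := l)) i) \<and> conv_on w S'' (\<lambda>n. c n i) ((L(m := l)) i)"
    proof (cases "i = m")
      case True then show ?thesis using S'' by simp
    next
      case False
      hence "i < m" using \<open>i < Suc m\<close> by simp
      hence "L i \<in> K \<and> 0 \<le> w (L i) \<and> conv_on w S' (\<lambda>n. c n i) (L i)" using S'(3) by blast
      thus ?thesis using False conv_on_subset[OF _ S''(1)] by simp
    qed
  qed
  moreover have "S'' \<subseteq> S" using S''(1) S'(1) by blast
  ultimately show ?case using S''(2) by blast
qed

end


context padic
begin

lemma cluster:
  fixes \<beta> :: "nat \<Rightarrow> complex"
  assumes b: "\<forall>n. 0 \<le> w (\<beta> n) \<and> alg_le K B (\<beta> n)"
  shows "\<exists>r. 0 \<le> w r \<and> (\<forall>N::real. \<forall>i. \<exists>n\<ge>i. ereal N < w (\<beta> n - r))"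
proof -
  have "\<forall>n. \<exists>c k. (\<forall>i. c i \<in> K \<and> 0 \<le> w (c i)) \<and> k \<le> B \<and> c k = 1 \<and> (\<Sum>i\<le>B. c i * \<beta> n ^ i) = 0"
    using alg_normalize b by blast
  then obtain cf kk where cf: "\<And>n. (\<forall>i. cf n i \<in> K \<and> 0 \<le> w (cf n i)) \<and> kk n \<le> B \<and> cf n (kk n) = 1
      \<and> (\<Sum>i\<le>B. cf n i * \<beta> n ^ i) = 0" by metis
  have "\<exists>c\<in>{..B}. infinite {n \<in> UNIV. kk n = c}"
    using cf by (intro pigeon_inf[of UNIV kk "{..B}"]) auto
  then obtain k0 where k0: "k0 \<le> B" "infinite {n. kk n = k0}" by auto
  have "\<forall>n\<in>{n. kk n = k0}. \<forall>i. cf n i \<in> K \<and> 0 \<le> w (cf n i)" using cf by blast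
  from compact_multi[OF k0(2) this, of "Suc B"]
  obtain S' L where S': "S' \<subseteq> {n. kk n = k0}" "infinite S'"
    "\<And>i. i < Suc B \<Longrightarrow> L i \<in> K \<and> 0 \<le> w (L i) \<and> conv_on w S' (\<lambda>n. cf n i) (L i)" by blast
  have unb: "\<exists>n\<in>S'. n \<ge> m" for m
    using S'(2) unfolding infinite_nat_iff_unbounded_le by blast
  have Lk0: "L k0 = 1"
  proof -
    have "\<forall>N. ereal N < w (1 - L k0)"
    proof
      fix N
      obtain n0 where "\<forall>n\<in>S'. n \<ge> n0 \<longrightarrow> ereal N < w (cf n k0 - L k0)"
        using S'(3)[of k0] k0(1) unfolding conv_on_def by auto
      moreover obtain n where "n \<in> S'" "n \<ge> n0" using unb by blast
      moreover have "cf n k0 = 1" using cf[of n] S'(1) \<open>n \<in> S'\<close> by auto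
      ultimately show "ereal N < w (1 - L k0)" by auto
    qed
    hence "w (1 - L k0) = \<infinity>" by (cases "w (1 - L k0)") (metis less_irrefl, auto)
    thus ?thesis by simp
  qed
  define H where "H = (\<Sum>i\<le>B. monom (L i) i)"
  have polyH: "poly H x = (\<Sum>i\<le>B. L i * x ^ i)" for x by (simp add: H_def poly_sum poly_monom)
  have "coeff H k0 = (\<Sum>i\<le>B. coeff (monom (L i) i) k0)" by (simp add: H_def coeff_sum)
  also have "\<dots> = L k0" using k0(1) by (simp add: coeff_monom)
  finally have H0: "H \<noteq> 0" using Lk0 by auto
  have hv: "\<exists>n0. \<forall>n\<in>S'. n \<ge> n0 \<longrightarrow> ereal N < w (poly H (\<beta> n))" for N
  proof -
    have "\<forall>i\<in>{..B}. \<exists>n0. \<forall>n\<in>S'. n \<ge> n0 \<longrightarrow> ereal N < w (L i - cf n i)"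
    proof
      fix i assume "i \<in> {..B}"
      hence "conv_on w S' (\<lambda>n. cf n i) (L i)" using S'(3) by auto
      thus "\<exists>n0. \<forall>n\<in>S'. n \<ge> n0 \<longrightarrow> ereal N < w (L i - cf n i)"
        unfolding conv_on_def by (simp add: w_sub_sym)
    qed
    then obtain nf where nf: "\<And>i. i \<in> {..B} \<Longrightarrow> \<forall>n\<in>S'. n \<ge> nf i \<longrightarrow> ereal N < w (L i - cf n i)"
      by metis
    define n0 where "n0 = (\<Sum>i\<le>B. nf i)"
    have "\<forall>n\<in>S'. n \<ge> n0 \<longrightarrow> ereal N < w (poly H (\<beta> n))"
    proof (intro ballI impI)
      fix n assume n: "n \<in> S'" "n \<ge> n0"
      have "poly H (\<beta> n) = (\<Sum>i\<le>B. L i * \<beta> n ^ i) - (\<Sum>i\<le>B. cf n i * \<beta> n ^ i)"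
        using cf[of n] by (simp add: polyH)
      also have "\<dots> = (\<Sum>i\<le>B. (L i - cf n i) * \<beta> n ^ i)"
        by (simp only: sum_subtractf left_diff_distrib)
      finally have eq: "poly H (\<beta> n) = (\<Sum>i\<le>B. (L i - cf n i) * \<beta> n ^ i)" .
      show "ereal N < w (poly H (\<beta> n))" unfolding eq
      proof (rule w_sum_gt)
        fix i assume i: "i \<in> {..B}"
        have "nf i \<le> n0" unfolding n0_def using i by (intro member_le_sum) auto
        hence "ereal N < w (L i - cf n i)" using nf[OF i] n by auto
        moreover have "0 \<le> w (\<beta> n ^ i)" using b by (simp add: w_power_nonneg)
        ultimately have "ereal (N + 0) < w (L i - cf n i) + w (\<beta> n ^ i)"
          by (metis add.commute ereal_add_lt zero_ereal_def)
        thus "ereal N < w ((L i - cf n i) * \<beta> n ^ i)" by (simp add: w_mult)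
      qed auto
    qed
    thus ?thesis by blast
  qed
  obtain a rs where ars: "a \<noteq> 0" "\<And>x. poly H x = a * prod_list (map (\<lambda>r. x - r) rs)"
    using poly_factor_complex[OF H0] by blast
  obtain ca where ca: "w a = ereal ca" using w_finite ars(1) by blast
  have wH: "w (poly H x) = ereal ca + sum_list (map (\<lambda>r. w (x - r)) rs)" for x
    by (simp add: ars(2) w_mult ca w_prod_list o_def)
  have "\<exists>r\<in>set rs. \<forall>N::real. \<forall>i. \<exists>n\<ge>i. ereal N < w (\<beta> n - r)"
  proof (rule ccontr)
    assume "\<not> ?thesis"
    hence "\<forall>r\<in>set rs. \<exists>N::real. \<exists>i. \<forall>n\<ge>i. w (\<beta> n - r) \<le> ereal N" by (simp add: not_less)
    then obtain Nf If where NI: "\<And>r. r \<in> set rs \<Longrightarrow> \<forall>n\<ge>If r. w (\<beta> n - r) \<le> ereal (Nf r)" by metis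
    define NN where "NN = (\<Sum>r\<in>set rs. \<bar>Nf r\<bar>)"
    define II where "II = (\<Sum>r\<in>set rs. If r)"
    obtain n0 where n0: "\<forall>n\<in>S'. n \<ge> n0 \<longrightarrow> ereal (ca + real (length rs) * NN) < w (poly H (\<beta> n))"
      using hv by blast
    obtain n where n: "n \<in> S'" "n \<ge> n0 + II" using unb by blast
    have "\<forall>r\<in>set rs. w (\<beta> n - r) \<le> ereal NN"
    proof
      fix r assume r: "r \<in> set rs"
      have "If r \<le> II" unfolding II_def using r by (intro member_le_sum) auto
      hence "w (\<beta> n - r) \<le> ereal (Nf r)" using NI[OF r] n by auto
      also have "Nf r \<le> \<bar>Nf r\<bar>" by simp
      also have "\<bar>Nf r\<bar> \<le> NN" unfolding NN_def using r by (intro member_le_sum) auto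
      finally show "w (\<beta> n - r) \<le> ereal NN" by simp
    qed
    hence "sum_list (map (\<lambda>r. w (\<beta> n - r)) rs) \<le> ereal (real (length rs) * NN)"
      by (rule sum_list_ereal_le)
    hence "ereal ca + sum_list (map (\<lambda>r. w (\<beta> n - r)) rs) \<le> ereal ca + ereal (real (length rs) * NN)"
      by (rule add_left_mono)
    hence "w (poly H (\<beta> n)) \<le> ereal (ca + real (length rs) * NN)"
      unfolding wH by simp
    moreover have "ereal (ca + real (length rs) * NN) < w (poly H (\<beta> n))" using n0 n by auto
    ultimately show False by simp
  qed
  then obtain r where r: "\<forall>N::real. \<forall>i. \<exists>n\<ge>i. ereal N < w (\<beta> n - r)" by blast
  obtain n where "ereal 0 < w (\<beta> n - r)" using r by blast
  hence "0 \<le> w (\<beta> n - r)" by (simp add: zero_ereal_def less_imp_le)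
  moreover have "0 \<le> w (\<beta> n)" using b by blast
  ultimately have "0 \<le> w (\<beta> n - (\<beta> n - r))" using w_ge_diff by blast
  thus ?thesis using r by auto
qed

end


lemma padicI: "prime q \<Longrightarrow> padic_closure_model q w \<Longrightarrow> padic w q"
  unfolding padic_def vfield_def padic_axioms_def padic_closure_model_def by auto

lemma IntR_iff: "f \<in> IntR v E \<longleftrightarrow> (\<forall>q. prime q \<longrightarrow> (\<forall>a\<in>E q. 0 \<le> v q (ev f a)))"
  by (simp add: IntR_def ev_def)

locale setting =
  fixes v :: "nat \<Rightarrow> complex \<Rightarrow> ereal" and E :: "nat \<Rightarrow> complex set"
  assumes model: "\<forall>q. prime q \<longrightarrow> padic_closure_model q (v q)"
begin

lemma pq: "prime q \<Longrightarrow> padic (v q) q" using model padicI by blast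

lemma IntR_mult: "f \<in> IntR v E \<Longrightarrow> g \<in> IntR v E \<Longrightarrow> f * g \<in> IntR v E"
  unfolding IntR_iff
proof (intro allI impI ballI)
  fix q :: nat and a assume f: "\<forall>q. prime q \<longrightarrow> (\<forall>a\<in>E q. 0 \<le> v q (ev f a))"
    and g: "\<forall>q. prime q \<longrightarrow> (\<forall>a\<in>E q. 0 \<le> v q (ev g a))" and q: "prime q" and a: "a \<in> E q"
  interpret padic "v q" q using pq[OF q] .
  show "0 \<le> v q (ev (f * g) a)" using f g q a by (simp add: w_mult)
qed

lemma IntR_add: "f \<in> IntR v E \<Longrightarrow> g \<in> IntR v E \<Longrightarrow> f + g \<in> IntR v E"
  unfolding IntR_iff
proof (intro allI impI ballI)
  fix q :: nat and a assume f: "\<forall>q. prime q \<longrightarrow> (\<forall>a\<in>E q. 0 \<le> v q (ev f a))"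
    and g: "\<forall>q. prime q \<longrightarrow> (\<forall>a\<in>E q. 0 \<le> v q (ev g a))" and q: "prime q" and a: "a \<in> E q"
  interpret padic "v q" q using pq[OF q] .
  have "0 \<le> v q (ev f a)" "0 \<le> v q (ev g a)" using f g q a by auto
  thus "0 \<le> v q (ev (f + g) a)" by (simp add: w_ge_add)
qed

lemma IntR_const_int: "[:of_int c:] \<in> IntR v E"
  unfolding IntR_iff
proof (intro allI impI ballI)
  fix q :: nat and a assume q: "prime q"
  interpret padic "v q" q using pq[OF q] .
  show "0 \<le> v q (ev [:of_int c:] a)" using w_of_int_nonneg by simp
qed

lemma IntR_1: "1 \<in> IntR v E" using IntR_const_int[of 1] by (simp add: one_pCons)
lemma IntR_m1: "-1 \<in> IntR v E" using IntR_const_int[of "-1"] by (simp add: one_pCons)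
lemma IntR_uminus: "f \<in> IntR v E \<Longrightarrow> - f \<in> IntR v E"
  using IntR_mult[OF IntR_m1] by (metis mult_minus1)
lemma IntR_diff: "f \<in> IntR v E \<Longrightarrow> g \<in> IntR v E \<Longrightarrow> f - g \<in> IntR v E"
  using IntR_add IntR_uminus by (metis diff_conv_add_uminus)
lemma IntR_power: "f \<in> IntR v E \<Longrightarrow> f ^ n \<in> IntR v E"
  by (induction n) (auto simp: IntR_1 IntR_mult)
lemma IntR_prod: "(\<And>i. i \<in> A \<Longrightarrow> f i \<in> IntR v E) \<Longrightarrow> (\<Prod>i\<in>A. f i) \<in> IntR v E"
  by (induction A rule: infinite_finite_induct) (auto simp: IntR_1 IntR_mult)

lemma R_simps[simp]: "carrier (IntRing v E) = IntR v E" "x \<otimes>\<^bsub>IntRing v E\<^esub> y = x * y"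
  "x \<oplus>\<^bsub>IntRing v E\<^esub> y = x + y" "\<one>\<^bsub>IntRing v E\<^esub> = 1" "\<zero>\<^bsub>IntRing v E\<^esub> = 0"
  by (simp_all add: IntRing_def)

end


context padic
begin

lemma ev_cont:
  "\<exists>C::real. \<forall>x z. 0 \<le> w x \<longrightarrow> 0 \<le> w z \<longrightarrow> ereal C + w (x - z) \<le> w (ev f x - ev f z)"
proof -
  define C where "C = - (\<Sum>i\<le>degree f. \<bar>real_of_int (padic_val_rat p (coeff f i))\<bar>)"
  have Cle: "ereal C \<le> w (of_rat (coeff f i))" if "i \<le> degree f" for i
  proof (cases "coeff f i = 0")
    case True then show ?thesis by simp
  next
    case False
    have "\<bar>real_of_int (padic_val_rat p (coeff f i))\<bar> \<le> (\<Sum>i\<le>degree f. \<bar>real_of_int (padic_val_rat p (coeff f i))\<bar>)"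
      using that by (intro member_le_sum) auto
    hence "C \<le> real_of_int (padic_val_rat p (coeff f i))" unfolding C_def by linarith
    thus ?thesis using w_rat[OF False] by simp
  qed
  have "\<forall>x z. 0 \<le> w x \<longrightarrow> 0 \<le> w z \<longrightarrow> ereal C + w (x - z) \<le> w (ev f x - ev f z)"
  proof (intro allI impI)
    fix x z assume x: "0 \<le> w x" and z: "0 \<le> w z"
    have "ev f x - ev f z = (\<Sum>i\<le>degree f. of_rat (coeff f i) * x ^ i - of_rat (coeff f i) * z ^ i)"
      by (simp add: ev_altdef sum_subtractf)
    also have "\<dots> = (\<Sum>i\<le>degree f. of_rat (coeff f i) * ((x - z) * (\<Sum>j<i. z ^ (i - Suc j) * x ^ j)))"
      by (intro sum.cong refl) (simp add: power_diff_sumr2[symmetric] right_diff_distrib)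
    finally have eq: "ev f x - ev f z = \<dots>" .
    show "ereal C + w (x - z) \<le> w (ev f x - ev f z)" unfolding eq
    proof (rule w_sum_ge)
      fix i assume i: "i \<in> {..degree f}"
      have s: "0 \<le> w (\<Sum>j<i. z ^ (i - Suc j) * x ^ j)"
        using x z by (intro w_sum_ge) (auto simp: w_mult w_power_nonneg)
      have "ereal C + w (x - z) \<le> w (of_rat (coeff f i)) + (w (x - z) + w (\<Sum>j<i. z ^ (i - Suc j) * x ^ j))"
      proof (rule add_mono)
        show "ereal C \<le> w (of_rat (coeff f i))" using Cle i by auto
        show "w (x - z) \<le> w (x - z) + w (\<Sum>j<i. z ^ (i - Suc j) * x ^ j)"
          using s by (metis add.right_neutral add_left_mono)
      qed
      thus "ereal C + w (x - z) \<le> w (of_rat (coeff f i) * ((x - z) * (\<Sum>j<i. z ^ (i - Suc j) * x ^ j)))"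
        by (simp add: w_mult)
    qed simp
  qed
  thus ?thesis by blast
qed

end


theorem mainTheorem2:
  fixes v :: "nat \<Rightarrow> complex \<Rightarrow> ereal" and E :: "nat \<Rightarrow> complex set"
    and M :: "rat poly set" and p :: nat
  assumes model: "\<forall>q. prime q \<longrightarrow> padic_closure_model q (v q)"
    and sub: "\<forall>q. prime q \<longrightarrow> E q \<subseteq> Zbar (v q)"
    and bdd: "\<forall>q. prime q \<longrightarrow> locally_bounded_at (v q) (E q)"
    and cl: "\<forall>q. prime q \<longrightarrow> closed_in_Zbar (v q) (E q)"
    and M: "primeideal M (IntRing v E)"
    and p: "prime p"
    and MZ: "{c::int. [:of_int c:] \<in> M} = {c. int p dvd c}"
  shows "maximalideal M (IntRing v E) \<and>
    (\<exists>a\<in>E p. M = {f \<in> IntR v E. 0 < v p (poly (map_poly of_rat f) a)})"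
proof -
  interpret setting v E using model by unfold_locales
  interpret P: padic "v p" p using pq[OF p] .
  interpret M: primeideal M "IntRing v E" by (rule M)
  have Mideal: "ideal M (IntRing v E)" by (rule M.is_ideal)
  obtain B0 where B0: "\<forall>a\<in>E p. \<exists>f::complex poly. f \<noteq> 0 \<and> (\<forall>i. coeff f i \<in> P.K) \<and> degree f \<le> B0 \<and> poly f a = 0"
    using bdd p unfolding locally_bounded_at_def by blast
  define B where "B = Suc B0"
  have Bpos: "B > 0" by (simp add: B_def)
  have algE: "alg_le P.K B a" if "a \<in> E p" for a
  proof -
    have "\<exists>f::complex poly. f \<noteq> 0 \<and> (\<forall>i. coeff f i \<in> P.K) \<and> degree f \<le> B0 \<and> poly f a = 0"
      using B0 that by (rule bspec)
    then obtain f :: "complex poly" where f: "f \<noteq> 0" "\<forall>i. coeff f i \<in> P.K" "degree f \<le> B0" "poly f a = 0"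
      by (elim exE conjE)
    have "alg_le P.K B0 a" by (rule alg_of_poly[OF f])
    thus ?thesis using alg_le_mono[of P.K B0 a B] P.K_0 by (simp add: B_def)
  qed
  have algEv: "alg_le P.K B (ev f a)" if "a \<in> E p" for f a using P.alg_ev algE[OF that] by blast
  have nonnegE: "0 \<le> v p a" if "a \<in> E p" for a
  proof -
    have "E p \<subseteq> Zbar (v p)" using sub p by blast
    thus ?thesis using that unfolding Zbar_def by blast
  qed
  have evnonneg: "0 \<le> v p (ev f a)" if "f \<in> IntR v E" "a \<in> E p" for f a
  proof -
    have "\<forall>q. prime q \<longrightarrow> (\<forall>a\<in>E q. 0 \<le> v q (ev f a))" using that(1) unfolding IntR_iff .
    thus ?thesis using p that(2) by blast
  qed
  have oneM: "1 \<notin> M"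
  proof
    assume "1 \<in> M"
    hence "M = carrier (IntRing v E)" using M.one_imp_carrier by simp
    thus False using M.I_notcarr by simp
  qed
  have MR: "M \<subseteq> IntR v E" using M.a_subset by simp
  have M_add: "a \<in> M \<Longrightarrow> b \<in> M \<Longrightarrow> a + b \<in> M" for a b
    using additive_subgroup.a_closed[OF ideal.axioms(1)[OF Mideal]] by simp
  have M_lmult: "a \<in> M \<Longrightarrow> x \<in> IntR v E \<Longrightarrow> x * a \<in> M" for a x
    using M.I_l_closed by simp
  have M_rmult: "a \<in> M \<Longrightarrow> x \<in> IntR v E \<Longrightarrow> a * x \<in> M" for a x
    using M.I_r_closed by simp
  have M_prime: "a \<in> IntR v E \<Longrightarrow> b \<in> IntR v E \<Longrightarrow> a * b \<in> M \<Longrightarrow> a \<in> M \<or> b \<in> M" for a b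
    using M.I_prime by simp
  have M_pow: "f \<in> M \<Longrightarrow> n > 0 \<Longrightarrow> f ^ n \<in> M" for f n
  proof (induction n)
    case 0 then show ?case by simp
  next
    case (Suc n)
    show ?case
    proof (cases n)
      case 0 then show ?thesis using Suc by simp
    next
      case (Suc m)
      hence "f ^ n \<in> M" using Suc.IH Suc.prems by simp
      hence "f * f ^ n \<in> M" using MR Suc.prems M_lmult by blast
      thus ?thesis by simp
    qed
  qed
  have powM: "f \<in> IntR v E \<Longrightarrow> f ^ n \<in> M \<Longrightarrow> f \<in> M" for f n
  proof (induction n)
    case 0 then show ?case using oneM by simp
  next
    case (Suc n)
    have "f * f ^ n \<in> M" using Suc.prems by simp
    hence "f \<in> M \<or> f ^ n \<in> M" using M_prime Suc.prems(1) IntR_power by blast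
    thus ?case using Suc.IH Suc.prems(1) by blast
  qed
  have pM: "[:of_nat p:] \<in> M"
  proof -
    have "int p \<in> {c. int p dvd c}" by simp
    hence "int p \<in> {c::int. [:of_int c:] \<in> M}" using MZ by simp
    thus ?thesis by simp
  qed
  have discharge: "f \<in> M" if f: "f \<in> IntR v E" and pos: "\<forall>\<beta>\<in>E p. 0 < v p (ev f \<beta>)" for f
  proof -
    define h where "h = f ^ B * [:1 / of_nat p:]"
    have evh: "ev h a = ev f a ^ B * inverse (of_nat p)" for a
      unfolding h_def ev_mult ev_power ev_const by (simp add: of_rat_divide divide_inverse of_rat_inverse)
    have p0: "p \<noteq> 0" using p by auto
    have "h \<in> IntR v E" unfolding IntR_iff
    proof (intro allI impI ballI)
      fix q :: nat and a assume q: "prime q" and a: "a \<in> E q"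
      interpret Q: padic "v q" q using pq[OF q] .
      show "0 \<le> v q (ev h a)"
      proof (cases "q = p")
        case True
        have a': "a \<in> E p" using a True by simp
        have d: "ereal (1 / real B) \<le> v p (ev f a)" using P.discrete[OF algEv[OF a'] Bpos] pos a' by blast
        have "v p (inverse (of_nat p)) = -1" using P.w_inverse[of "of_nat p"] P.w_p p0 by simp
        moreover have "v p (ev f a ^ B) = ereal (real B) * v p (ev f a)" by (rule P.w_power)
        ultimately have e1: "v p (ev h a) = ereal (real B) * v p (ev f a) + (-1)" by (simp add: evh P.w_mult)
        have e2: "1 \<le> ereal (real B) * v p (ev f a)"
        proof (cases "v p (ev f a)")
          case (real r)
          hence "1 / real B \<le> r" using d by simp
          hence "1 \<le> real B * r" using Bpos by (simp add: field_simps)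
          thus ?thesis using real by simp
        next
          case PInf then show ?thesis using Bpos by simp
        next
          case MInf then show ?thesis using d by simp
        qed
        have "0 \<le> ereal (real B) * v p (ev f a) + (-1)" using e2
          by (cases "ereal (real B) * v p (ev f a)") (auto simp: one_ereal_def)
        thus ?thesis using e1 True by simp
      next
        case False
        have "\<not> int q dvd int p"
        proof
          assume "int q dvd int p"
          hence "q dvd p" by simp
          hence "q = p" using primes_dvd_imp_eq q p by blast
          thus False using False by simp
        qed
        hence "v q (of_int (int p)) = 0" by (rule Q.w_of_int_ndvd)
        hence "v q (inverse (of_nat p)) = 0" using Q.w_inverse[of "of_nat p"] p0 by simp
        moreover have "0 \<le> v q (ev f a)" using f q a by (auto simp: IntR_iff)
        ultimately show ?thesis by (simp add: evh Q.w_mult Q.w_power_nonneg)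
      qed
    qed
    moreover have "f ^ B = [:of_nat p:] * h" using p0 by (simp add: h_def)
    ultimately have "f ^ B \<in> M" using M_rmult[OF pM] by metis
    thus "f \<in> M" using powM f by blast
  qed
  define N where "N = (fact (p ^ B) :: nat)"
  have N0: "N > 0" by (simp add: N_def)
  have step: "f ^ N - 1 \<in> M" if f: "f \<in> IntR v E" and fM: "f \<notin> M" for f
  proof -
    have "f * (f ^ N - 1) \<in> M"
    proof (rule discharge)
      show "f * (f ^ N - 1) \<in> IntR v E" using f by (intro IntR_mult IntR_diff IntR_power IntR_1)
      show "\<forall>\<beta>\<in>E p. 0 < v p (ev (f * (f ^ N - 1)) \<beta>)"
      proof
        fix \<beta> assume b: "\<beta> \<in> E p"
        define y where "y = ev f \<beta>"
        have y0: "0 \<le> v p y" using evnonneg f b by (simp add: y_def)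
        have "0 < v p (y * (y ^ N - 1))"
        proof (cases "v p y = 0")
          case True
          have "0 < v p (y ^ N - 1)" unfolding N_def using P.residue[OF algEv[OF b] True[unfolded y_def]]
            by (simp add: y_def)
          thus ?thesis using True by (simp add: P.w_mult)
        next
          case False
          hence "0 < v p y" using y0 by simp
          moreover have "0 \<le> v p (y ^ N - 1)" using P.w_power_nonneg[OF y0] by (intro P.w_ge_diff) auto
          ultimately show ?thesis by (simp add: P.w_mult ereal_pos_add')
        qed
        thus "0 < v p (ev (f * (f ^ N - 1)) \<beta>)" by (simp add: y_def)
      qed
    qed
    hence "f \<in> M \<or> f ^ N - 1 \<in> M" using M_prime f by (meson IntR_1 IntR_diff IntR_power)
    thus ?thesis using fM by blast
  qed
  have maxi: "maximalideal M (IntRing v E)"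
  proof (rule maximalidealI[OF Mideal])
    show "carrier (IntRing v E) \<noteq> M" by (rule M.I_notcarr)
    fix J assume J: "ideal J (IntRing v E)" "M \<subseteq> J" "J \<subseteq> carrier (IntRing v E)"
    show "J = M \<or> J = carrier (IntRing v E)"
    proof (cases "J = M")
      case True then show ?thesis by simp
    next
      case False
      then obtain f where f: "f \<in> J" "f \<notin> M" using J(2) by blast
      have fR: "f \<in> IntR v E" using f J(3) by auto
      have s: "f ^ N - 1 \<in> J" using step[OF fR f(2)] J(2) by blast
      obtain N' where N': "N = Suc N'" using N0 gr0_implies_Suc by blast
      have "f \<otimes>\<^bsub>IntRing v E\<^esub> f ^ N' \<in> J" using ideal.I_r_closed[OF J(1) f(1)] fR IntR_power by simp
      hence fN: "f ^ N \<in> J" using N' by simp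
      have c: "-1 \<in> carrier (IntRing v E)" using IntR_m1 by simp
      have "(-1) \<otimes>\<^bsub>IntRing v E\<^esub> (f ^ N - 1) \<in> J" by (rule ideal.I_l_closed[OF J(1) s c])
      hence m: "(-1) * (f ^ N - 1) \<in> J" by (simp only: R_simps)
      have "f ^ N \<oplus>\<^bsub>IntRing v E\<^esub> (-1) * (f ^ N - 1) \<in> J"
        by (rule additive_subgroup.a_closed[OF ideal.axioms(1)[OF J(1)] fN m])
      hence "1 \<in> J" by simp
      hence "J = carrier (IntRing v E)" using ideal.one_imp_carrier[OF J(1)] by simp
      thus ?thesis by simp
    qed
  qed
  have M0: "0 \<in> M" using additive_subgroup.zero_closed[OF ideal.axioms(1)[OF Mideal]] by simp
  have cntU: "countable (UNIV :: rat poly set)"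
  proof (rule countable_image_inj_on[of coeffs])
    show "countable (coeffs ` (UNIV :: rat poly set))" by (rule countable_subset[OF subset_UNIV countableI_type])
    show "inj_on coeffs (UNIV :: rat poly set)" by (simp add: inj_on_def coeffs_eq_iff)
  qed
  have cntM: "countable M" by (rule countable_subset[OF subset_UNIV cntU])
  define g where "g = from_nat_into M"
  have gM: "g i \<in> M" for i using M0 from_nat_into[of M i] by (auto simp: g_def)
  have gR: "g i \<in> IntR v E" for i using gM MR by blast
  have ex: "\<exists>a\<in>E p. M = {f \<in> IntR v E. 0 < v p (poly (map_poly of_rat f) a)}"
  proof (rule ccontr)
    assume nex: "\<not> ?thesis"
    have bad: "\<exists>f\<in>M. \<not> 0 < v p (ev f \<alpha>)" if \<alpha>: "\<alpha> \<in> E p" for \<alpha>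
    proof (rule ccontr)
      assume "\<not> ?thesis"
      hence allpos: "\<forall>f\<in>M. 0 < v p (ev f \<alpha>)" by blast
      have "M = {f \<in> IntR v E. 0 < v p (poly (map_poly of_rat f) \<alpha>)}"
      proof
        show "M \<subseteq> {f \<in> IntR v E. 0 < v p (poly (map_poly of_rat f) \<alpha>)}"
          using MR allpos by (auto simp: ev_def)
        show "{f \<in> IntR v E. 0 < v p (poly (map_poly of_rat f) \<alpha>)} \<subseteq> M"
        proof
          fix f assume "f \<in> {f \<in> IntR v E. 0 < v p (poly (map_poly of_rat f) \<alpha>)}"
          hence f: "f \<in> IntR v E" "0 < v p (ev f \<alpha>)" by (auto simp: ev_def)
          show "f \<in> M"
          proof (rule ccontr)
            assume "f \<notin> M"
            hence "f ^ N - 1 \<in> M" by (rule step[OF f(1)])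
            hence "0 < v p (ev (f ^ N - 1) \<alpha>)" using allpos by blast
            hence c1: "0 < v p (ev f \<alpha> ^ N - 1)" by simp
            have "0 < v p (ev f \<alpha> ^ N)" using P.w_power_pos[OF f(2) N0] .
            hence "v p (-1) < v p (ev f \<alpha> ^ N)" by simp
            hence "v p (-1 + ev f \<alpha> ^ N) = v p (-1)" by (rule P.w_strict)
            hence "v p (ev f \<alpha> ^ N - 1) = 0" by simp
            thus False using c1 by simp
          qed
        qed
      qed
      thus False using nex \<alpha> by blast
    qed
    have claim: "\<exists>\<beta>\<in>E p. \<forall>i\<le>n. 0 < v p (ev (g i) \<beta>)" for n
    proof (rule ccontr)
      assume "\<not> ?thesis"
      hence nc: "\<forall>\<beta>\<in>E p. \<exists>i\<le>n. \<not> 0 < v p (ev (g i) \<beta>)" by blast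
      define P where "P = (\<Prod>i\<le>n. 1 - g i ^ N)"
      have PR: "P \<in> IntR v E" unfolding P_def using gR by (intro IntR_prod IntR_diff IntR_1 IntR_power) auto
      have oneP: "1 - (\<Prod>i\<le>m. 1 - g i ^ N) \<in> M" for m
      proof (induction m)
        case 0
        have "g 0 ^ N \<in> M" using M_pow[OF gM N0] .
        thus ?case by simp
      next
        case (Suc m)
        have eq: "1 - (\<Prod>i\<le>Suc m. 1 - g i ^ N) = (1 - (\<Prod>i\<le>m. 1 - g i ^ N)) + (\<Prod>i\<le>m. 1 - g i ^ N) * g (Suc m) ^ N"
          by (simp add: algebra_simps)
        have "(\<Prod>i\<le>m. 1 - g i ^ N) \<in> IntR v E" using gR by (intro IntR_prod IntR_diff IntR_1 IntR_power) auto
        hence "(\<Prod>i\<le>m. 1 - g i ^ N) * g (Suc m) ^ N \<in> M" using M_pow[OF gM N0] M_lmult by blast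
        thus ?case unfolding eq using Suc.IH M_add by blast
      qed
      have "P \<in> M"
      proof (rule discharge[OF PR], rule ballI)
        fix \<beta> assume b: "\<beta> \<in> E p"
        obtain i where i: "i \<le> n" "\<not> 0 < v p (ev (g i) \<beta>)" using nc b by blast
        define y where "y j = ev (g j) \<beta>" for j
        have y0: "0 \<le> v p (y j)" for j using evnonneg[OF gR b] by (simp add: y_def)
        have "v p (y i) = 0" using y0[of i] i(2) by (simp add: y_def)
        hence "0 < v p (y i ^ N - 1)" unfolding N_def using P.residue[OF algEv[OF b]] by (simp add: y_def)
        hence pi: "0 < v p (1 - y i ^ N)" by (simp add: P.w_sub_sym)
        have nn: "0 \<le> v p (1 - y j ^ N)" for j
        proof -
          have "0 \<le> v p 1" by simp
          moreover have "0 \<le> v p (y j ^ N)" using y0 by (rule P.w_power_nonneg)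
          ultimately show ?thesis by (rule P.w_ge_diff)
        qed
        have "ev P \<beta> = (\<Prod>j\<le>n. 1 - y j ^ N)" by (simp add: P_def ev_prod y_def)
        hence "v p (ev P \<beta>) = (\<Sum>j\<le>n. v p (1 - y j ^ N))" by (simp add: P.w_prod)
        also have "\<dots> = v p (1 - y i ^ N) + (\<Sum>j\<in>{..n} - {i}. v p (1 - y j ^ N))"
          using i(1) by (subst sum.remove[of _ i]) auto
        finally show "0 < v p (ev P \<beta>)" using pi nn by (simp add: ereal_pos_add' sum_nonneg)
      qed
      hence "(1 - P) + P \<in> M" using oneP[of n] M_add unfolding P_def by blast
      thus False using oneM by simp
    qed
    then obtain \<beta> where \<beta>: "\<And>n. \<beta> n \<in> E p \<and> (\<forall>i\<le>n. 0 < v p (ev (g i) (\<beta> n)))" by metis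
    have "\<forall>n. 0 \<le> v p (\<beta> n) \<and> alg_le P.K B (\<beta> n)" using \<beta> nonnegE algE by blast
    from P.cluster[OF this] obtain r where r: "0 \<le> v p r" "\<forall>N::real. \<forall>i. \<exists>n\<ge>i. ereal N < v p (\<beta> n - r)"
      by blast
    have rE: "r \<in> E p"
    proof -
      define nn where "nn m = (SOME n. n \<ge> m \<and> ereal (real m) < v p (\<beta> n - r))" for m
      have nn: "nn m \<ge> m \<and> ereal (real m) < v p (\<beta> (nn m) - r)" for m
      proof -
        have "\<exists>n. n \<ge> m \<and> ereal (real m) < v p (\<beta> n - r)" using r(2) by blast
        from someI_ex[OF this] show ?thesis unfolding nn_def .
      qed
      have conv: "v_converges (v p) (\<lambda>m. \<beta> (nn m)) r"
        unfolding v_converges_def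
      proof
        fix N :: real
        have "\<forall>m\<ge>nat \<lceil>N\<rceil>. ereal N < v p (\<beta> (nn m) - r)"
        proof (intro allI impI)
          fix m assume "m \<ge> nat \<lceil>N\<rceil>"
          hence "ereal N \<le> ereal (real m)" by simp
          thus "ereal N < v p (\<beta> (nn m) - r)" using nn[of m] by (meson order_le_less_trans)
        qed
        thus "\<exists>n0. \<forall>m\<ge>n0. ereal N < v p (\<beta> (nn m) - r)" by blast
      qed
      have "closed_in_Zbar (v p) (E p)" using cl p by blast
      hence H: "\<forall>x l. (\<forall>n. x n \<in> E p) \<and> l \<in> Zbar (v p) \<and> v_converges (v p) x l \<longrightarrow> l \<in> E p"
        unfolding closed_in_Zbar_def .
      have H2: "(\<forall>n. \<beta> (nn n) \<in> E p) \<and> r \<in> Zbar (v p) \<and> v_converges (v p) (\<lambda>m. \<beta> (nn m)) r \<longrightarrow> r \<in> E p"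
        using spec[OF spec[OF H, of "\<lambda>m. \<beta> (nn m)"], of r] by simp
      have "\<forall>n. \<beta> (nn n) \<in> E p" using \<beta> by blast
      moreover have "r \<in> Zbar (v p)" using r(1) by (simp add: Zbar_def)
      ultimately show ?thesis using conv H2 by blast
    qed
    have "\<forall>f\<in>M. 0 < v p (ev f r)"
    proof
      fix f assume fM: "f \<in> M"
      obtain i where gi: "g i = f" using from_nat_into_surj[OF cntM fM] g_def by blast
      obtain C where C: "\<forall>x z. 0 \<le> v p x \<longrightarrow> 0 \<le> v p z \<longrightarrow> ereal C + v p (x - z) \<le> v p (ev f x - ev f z)"
        using P.ev_cont by blast
      obtain n where n: "n \<ge> i" "ereal (1 / real B - C) < v p (\<beta> n - r)" using r(2) by blast
      have bn: "\<beta> n \<in> E p" using \<beta> by blast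
      have pos: "0 < v p (ev f (\<beta> n))" using \<beta>[of n] n(1) gi by blast
      have d1: "ereal (1 / real B) \<le> v p (ev f (\<beta> n))" by (rule P.discrete[OF algEv[OF bn] Bpos pos])
      have "ereal C + v p (\<beta> n - r) \<le> v p (ev f (\<beta> n) - ev f r)" using C nonnegE[OF bn] r(1) by blast
      moreover have "ereal (C + (1 / real B - C)) < ereal C + v p (\<beta> n - r)"
        by (rule ereal_add_lt) (use n(2) in auto)
      ultimately have d2: "ereal (1 / real B) < v p (ev f (\<beta> n) - ev f r)" by simp
      have "ereal (1 / real B) \<le> v p (ev f (\<beta> n) - (ev f (\<beta> n) - ev f r))"
        by (rule P.w_ge_diff[OF d1 less_imp_le[OF d2]])
      hence "ereal (1 / real B) \<le> v p (ev f r)" by simp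
      moreover have "0 < ereal (1 / real B)" using Bpos by simp
      ultimately show "0 < v p (ev f r)" by (meson less_le_trans)
    qed
    thus False using bad[OF rE] by blast
  qed
  show ?thesis using maxi ex by blast
qed


end
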